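(* Let $G\le\mathrm{Aut}(\mathcal{T}_d)$ be self-similar and let $H\le G$ be $A$-coarsely self-similar for some finite $A\subseteq V_d\cap\mathrm{Aut}(\mathcal{T}_d)$. Then for every $m$, every $[x]_H\in P_H^m$ and every $q\in\mathbb{N}$, there are only finitely many $[y]_H\in P_H^m$ with $[x]_H<[y]_H$ and $\phi([y]_H)=q$.
   Context: Setting. $d\ge2$, $\mathcal{T}_d$ the rooted $d$-ary tree on $X^*$, $X=\{1,\dots,d\}$. $S_n\wr G=S_n\ltimes G^n$, elements $\sigma(g_1,\dots,g_n)$, product $\sigma(\vec f)\tau(\vec g)=\sigma\tau(f_{\tau(1)}g_1,\dots,f_{\tau(n)}g_n)$ (permutations act on the left). Wreath recursion $f=\rho(f)(f_1,\dots,f_d)$, $f(xw)=\rho(f)(x)f_x(w)$. $G$ self-similar: all states of elements of $G$ are in $G$. Cloning maps $\kappa_k^n:S_n\wr G\to S_{n+d-1}\wr G$: $(\sigma(f_1,\dots,f_n))\kappa_k^n=(\sigma)\varsigma_k^n\rho(f_k)^{(k)}(f_1,\dots,f_{k-1},f_k^1,\dots,f_k^d,f_{k+1},\dots,f_n)$ with $f_k=\rho(f_k)(f_k^1,\dots,f_k^d)$, where $\tau^{(k)}\in S_{n+d-1}$ acts by $k+j-1\mapsto k+\tau(j)-1$ on $\{k,\dots,k+d-1\}$ and trivially elsewhere, and $(\sigma)\varsigma_k^n\in S_{n+d-1}$ is obtained from $\sigma$ by replacing domain point $k$ by the block $k,\dots,k+d-1$ and range point $\sigma(k)$ by the block $\sigma(k),\dots,\sigma(k)+d-1$,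 with $k+j\mapsto\sigma(k)+j$, other points keeping their relative order. Groupoid. A forest is a finite ordered tuple of finite rooted $d$-ary trees (each vertex has $0$ or $d$ ordered children); its roots and its leaves are ordered left to right. Consider triples $(F_-,f,F_+)$ with $F_\pm$ forests with the same number $n$ of leaves and $f\in S_n\wr G$. An expansion replaces it by $(F_-',(f)\kappa_k^n,F_+')$ with $F_+'$ = $F_+$ with a $d$-caret attached at its $k$th leaf and $F_-'$ = $F_-$ with a $d$-caret attached at its $\sigma(k)$th leaf ($f=\sigma(\vec f)$). $[F_-,f,F_+]$ is the class under the equivalence generated by expansions; the roots of $F_-$ are its heads and those of $F_+$ its feet (their numbers are invariants). These classes form a groupoid $\mathcal{G}$: if $x$ has as many feet as $y$ has heads, expand to $x=[F,f,E]$, $y=[E,g,D]$ and set $xy=[F,fg,D]$; $x^{-1}=[F_+,f^{-1},F_-]$. $1_n$ denotes the forest of $n$ one-vertex trees (and also $[1_n,\mathrm{id},1_n]$); $\wedge_k^n$ is $1_n$ with a $d$-caret attached at the $k$th vertex. The elements with one head and one foot form a group isomorphic to $V_d(G)$. Poset. Fix $H\le G$. For $x\in\mathcal{G}$ with $n$ feet put $[x]_H=x\{[1_n,w,1_n]:w\in S_n\wr H\}$; $P_H^m$ is the set of such cosets with $x$ having $m$ heads. A splitting is an element of the form $[1_n,w_0,1_n][\wedge_{k_1}^n,w_1,1_{n+d-1}]\cdots[\wedge_{k_r}^{n+(r-1)(d-1)},w_r,1_{n+r(d-1)}]$ with $w_i\in S_{n+i(d-1)}\wr H$ and $1\le k_i\le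 n+(i-1)(d-1)$; $r$ is its length. $[x]_H\le[y]_H$ iff $x^{-1}y$ is a splitting (a well-defined partial order). $\phi([x]_H)$ is the number of feet of $x$. $A$-coarsely self-similar: for finite $A\subseteq V_d\cap\mathrm{Aut}(\mathcal{T}_d)$ (tree automorphisms lying in the Higman–Thompson group $V_d$), $H$ is $A$-coarsely self-similar if every first-level state of every $h\in H$ lies in $H\cup A$. *)

theory Defs
  imports Main "HOL-Combinatorics.Permutations"
begin

text \<open>Conventions: everything is 0-based.  The alphabet is
  X = {0..<d}, vertices of the d-ary tree are words in lists {0..<d},
  permutations in S_n act on {0..<n} (identity elsewhere), leaves/roots are
  indexed 0..n-1 from left to right.  Tree automorphisms are functions on
  nat lists that are the identity off the tree.  Groups act on the left,
  the product f g is composition f o g.\<close>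

definition words :: "nat \<Rightarrow> nat list set" where
  "words d = lists {0..<d}"

definition aut :: "nat \<Rightarrow> (nat list \<Rightarrow> nat list) set" where
  "aut d = {g. bij_betw g (words d) (words d)
              \<and> (\<forall>w. w \<notin> words d \<longrightarrow> g w = w)
              \<and> (\<forall>w\<in>words d. length (g w) = length w)
              \<and> (\<forall>u\<in>words d. \<forall>v\<in>words d. take (length u) (g (u @ v)) = g u)}"

definition ainv :: "nat \<Rightarrow> (nat list \<Rightarrow> nat list) \<Rightarrow> (nat list \<Rightarrow> nat list)" where
  "ainv d g = (\<lambda>w. if w \<in> words d then inv_into (words d) g w else w)"

definition subgrp :: "nat \<Rightarrow> (nat list \<Rightarrow> nat list) set \<Rightarrow> bool" where
  "subgrp d H \<longleftrightarrow> H \<subseteq> aut d \<and> id \<in> H \<and> (\<forall>f\<in>H. \<forall>g\<in>H. f \<circ> g \<in> H)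
                 \<and> (\<forall>f\<in>H. ainv d f \<in> H)"

text \<open>Wreath recursion f = rho(f)(f_0,...,f_{d-1}): f(x w) = rho(f)(x) f_x(w).\<close>
definition rho :: "nat \<Rightarrow> (nat list \<Rightarrow> nat list) \<Rightarrow> nat \<Rightarrow> nat" where
  "rho d g = (\<lambda>x. if x < d then hd (g [x]) else x)"

definition state :: "nat \<Rightarrow> (nat list \<Rightarrow> nat list) \<Rightarrow> nat \<Rightarrow> (nat list \<Rightarrow> nat list)" where
  "state d g x = (\<lambda>w. if w \<in> words d then tl (g (x # w)) else w)"

definition self_similar :: "nat \<Rightarrow> (nat list \<Rightarrow> nat list) set \<Rightarrow> bool" where
  "self_similar d G \<longleftrightarrow> (\<forall>g\<in>G. \<forall>x<d. state d g x \<in> G)"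

definition coarsely_self_similar ::
  "nat \<Rightarrow> (nat list \<Rightarrow> nat list) set \<Rightarrow> (nat list \<Rightarrow> nat list) set \<Rightarrow> bool" where
  "coarsely_self_similar d A H \<longleftrightarrow> (\<forall>h\<in>H. \<forall>x<d. state d h x \<in> H \<union> A)"

definition boundary :: "nat \<Rightarrow> (nat \<Rightarrow> nat) set" where
  "boundary d = {\<xi>. \<forall>i. \<xi> i < d}"

definition is_prefix :: "nat list \<Rightarrow> (nat \<Rightarrow> nat) \<Rightarrow> bool" where
  "is_prefix u \<xi> \<longleftrightarrow> u = map \<xi> [0..<length u]"

definition bdry_act :: "(nat list \<Rightarrow> nat list) \<Rightarrow> (nat \<Rightarrow> nat) \<Rightarrow> (nat \<Rightarrow> nat)" where
  "bdry_act g \<xi> = (\<lambda>i. g (map \<xi> [0..<Suc i]) ! i)"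

text \<open>Complete prefix code = set of leaves of a finite rooted d-ary tree.\<close>
definition complete_prefix_code :: "nat \<Rightarrow> nat list set \<Rightarrow> bool" where
  "complete_prefix_code d C \<longleftrightarrow> finite C \<and> C \<subseteq> words d
     \<and> (\<forall>\<xi>\<in>boundary d. \<exists>!u. u \<in> C \<and> is_prefix u \<xi>)"

definition in_Vd :: "nat \<Rightarrow> (nat list \<Rightarrow> nat list) \<Rightarrow> bool" where
  "in_Vd d g \<longleftrightarrow> (\<exists>C1 C2 \<beta>. complete_prefix_code d C1 \<and> complete_prefix_code d C2
      \<and> bij_betw \<beta> C1 C2
      \<and> (\<forall>\<xi>\<in>boundary d. \<forall>u\<in>C1. is_prefix u \<xi> \<longrightarrow>
           bdry_act g \<xi> = (\<lambda>i. if i < length (\<beta> u) then \<beta> u ! i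
                                else \<xi> (i - length (\<beta> u) + length u))))"

section \<open>Wreath products S_n wr G\<close>

type_synonym wel = "(nat \<Rightarrow> nat) \<times> (nat list \<Rightarrow> nat list) list"

definition wr :: "nat \<Rightarrow> (nat list \<Rightarrow> nat list) set \<Rightarrow> wel set" where
  "wr n G = {(\<sigma>, fs). \<sigma> permutes {0..<n} \<and> length fs = n \<and> set fs \<subseteq> G}"

definition wmult :: "wel \<Rightarrow> wel \<Rightarrow> wel" where
  "wmult x y = (case x of (\<sigma>, fs) \<Rightarrow> case y of (\<tau>, gs) \<Rightarrow>
      (\<sigma> \<circ> \<tau>, map (\<lambda>i. (fs ! \<tau> i) \<circ> (gs ! i)) [0..<length gs]))"

definition winv :: "nat \<Rightarrow> wel \<Rightarrow> wel" where
  "winv d x = (case x of (\<sigma>, fs) \<Rightarrow>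
      (inv_into UNIV \<sigma>, map (\<lambda>i. ainv d (fs ! (inv_into UNIV \<sigma> i))) [0..<length fs]))"

definition lift :: "nat \<Rightarrow> nat \<Rightarrow> (nat \<Rightarrow> nat) \<Rightarrow> (nat \<Rightarrow> nat)" where
  "lift d k \<tau> = (\<lambda>i. if k \<le> i \<and> i < k + d then k + \<tau> (i - k) else i)"

definition varsigma :: "nat \<Rightarrow> nat \<Rightarrow> (nat \<Rightarrow> nat) \<Rightarrow> nat \<Rightarrow> (nat \<Rightarrow> nat)" where
  "varsigma d n \<sigma> k = (\<lambda>i.
     let sh = (\<lambda>v. if v < \<sigma> k then v else v + (d - 1)) in
     if i < k then sh (\<sigma> i)
     else if i < k + d then \<sigma> k + (i - k)
     else if i < n + d - 1 then sh (\<sigma> (i - (d - 1)))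
     else i)"

definition kappa :: "nat \<Rightarrow> wel \<Rightarrow> nat \<Rightarrow> wel" where
  "kappa d x k = (case x of (\<sigma>, fs) \<Rightarrow>
     (varsigma d (length fs) \<sigma> k \<circ> lift d k (rho d (fs ! k)),
      take k fs @ map (state d (fs ! k)) [0..<d] @ drop (Suc k) fs))"

datatype tree = Lf | Nd "tree list"

fun full :: "nat \<Rightarrow> tree \<Rightarrow> bool" where
  "full d Lf = True"
| "full d (Nd ts) = (length ts = d \<and> (\<forall>t\<in>set ts. full d t))"

fun nleaves :: "tree \<Rightarrow> nat" where
  "nleaves Lf = 1"
| "nleaves (Nd ts) = sum_list (map nleaves ts)"

definition forest :: "nat \<Rightarrow> tree list \<Rightarrow> bool" where
  "forest d F \<longleftrightarrow> (\<forall>t\<in>set F. full d t)"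

definition fleaves :: "tree list \<Rightarrow> nat" where
  "fleaves F = sum_list (map nleaves F)"

text \<open>Attach a d-caret at the k-th leaf (0-based, left to right).\<close>
fun attach :: "nat \<Rightarrow> nat \<Rightarrow> tree \<Rightarrow> tree"
and attachF :: "nat \<Rightarrow> nat \<Rightarrow> tree list \<Rightarrow> tree list" where
  "attach d k Lf = (if k = 0 then Nd (replicate d Lf) else Lf)"
| "attach d k (Nd ts) = Nd (attachF d k ts)"
| "attachF d k [] = []"
| "attachF d k (t # ts) =
     (if k < nleaves t then attach d k t # ts else t # attachF d (k - nleaves t) ts)"

definition triv :: "nat \<Rightarrow> tree list" where
  "triv n = replicate n Lf"

definition caretF :: "nat \<Rightarrow> nat \<Rightarrow> nat \<Rightarrow> tree list" where
  "caretF d n k = attachF d k (triv n)"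

section \<open>The groupoid\<close>

type_synonym triple = "tree list \<times> wel \<times> tree list"

definition valid :: "nat \<Rightarrow> (nat list \<Rightarrow> nat list) set \<Rightarrow> triple \<Rightarrow> bool" where
  "valid d G t = (case t of (Fm, f, Fp) \<Rightarrow>
     forest d Fm \<and> forest d Fp \<and> fleaves Fm = length (snd f) \<and> fleaves Fp = length (snd f)
     \<and> f \<in> wr (length (snd f)) G)"

definition expand :: "nat \<Rightarrow> triple \<Rightarrow> nat \<Rightarrow> triple" where
  "expand d t k = (case t of (Fm, f, Fp) \<Rightarrow>
     (attachF d (fst f k) Fm, kappa d f k, attachF d k Fp))"

definition expRel :: "nat \<Rightarrow> (nat list \<Rightarrow> nat list) set \<Rightarrow> (triple \<times> triple) set" where
  "expRel d G = {(t, expand d t k) | t k. valid d G t \<and> k < length (snd (fst (snd t)))}"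

definition eqrel :: "nat \<Rightarrow> (nat list \<Rightarrow> nat list) set \<Rightarrow> (triple \<times> triple) set" where
  "eqrel d G = (expRel d G \<union> (expRel d G)\<inverse>)\<^sup>*"

definition cls :: "nat \<Rightarrow> (nat list \<Rightarrow> nat list) set \<Rightarrow> triple \<Rightarrow> triple set" where
  "cls d G t = {t'. (t, t') \<in> eqrel d G}"

definition grpd :: "nat \<Rightarrow> (nat list \<Rightarrow> nat list) set \<Rightarrow> triple set set" where
  "grpd d G = {cls d G t | t. valid d G t}"

definition has_heads :: "triple set \<Rightarrow> nat \<Rightarrow> bool" where
  "has_heads X m \<longleftrightarrow> (\<exists>Fm f Fp. (Fm, f, Fp) \<in> X \<and> length Fm = m)"

definition has_feet :: "triple set \<Rightarrow> nat \<Rightarrow> bool" where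
  "has_feet X m \<longleftrightarrow> (\<exists>Fm f Fp. (Fm, f, Fp) \<in> X \<and> length Fp = m)"

text \<open>Product: expand to x = [F,f,E], y = [E,g,D] and take [F, fg, D].\<close>
definition gmult :: "nat \<Rightarrow> (nat list \<Rightarrow> nat list) set \<Rightarrow> triple set \<Rightarrow> triple set \<Rightarrow> triple set" where
  "gmult d G X Y = {t. \<exists>F f E g D. (F, f, E) \<in> X \<and> (E, g, D) \<in> Y
                         \<and> ((F, wmult f g, D), t) \<in> eqrel d G}"

definition ginv :: "nat \<Rightarrow> (nat list \<Rightarrow> nat list) set \<Rightarrow> triple set \<Rightarrow> triple set" where
  "ginv d G X = {t. \<exists>Fm f Fp. (Fm, f, Fp) \<in> X \<and> ((Fp, winv d f, Fm), t) \<in> eqrel d G}"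

section \<open>The poset P_H\<close>

definition coset :: "nat \<Rightarrow> (nat list \<Rightarrow> nat list) set \<Rightarrow> (nat list \<Rightarrow> nat list) set
                     \<Rightarrow> triple set \<Rightarrow> triple set set" where
  "coset d G H x = {gmult d G x (cls d G (triv n, w, triv n)) | n w. has_feet x n \<and> w \<in> wr n H}"

definition PH :: "nat \<Rightarrow> (nat list \<Rightarrow> nat list) set \<Rightarrow> (nat list \<Rightarrow> nat list) set
                  \<Rightarrow> nat \<Rightarrow> triple set set set" where
  "PH d G H m = {coset d G H x | x. x \<in> grpd d G \<and> has_heads x m}"

text \<open>Splittings [1_n,w_0,1_n][caret_{k_1},w_1,1_{n+d-1}]...; spl n X: X a splitting with n heads.\<close>
inductive spl :: "nat \<Rightarrow> (nat list \<Rightarrow> nat list) set \<Rightarrow> (nat list \<Rightarrow> nat list) set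
                  \<Rightarrow> nat \<Rightarrow> triple set \<Rightarrow> bool"
  for d G H where
  spl_base: "w \<in> wr n H \<Longrightarrow> spl d G H n (cls d G (triv n, w, triv n))"
| spl_step: "spl d G H n X \<Longrightarrow> has_feet X m \<Longrightarrow> k < m \<Longrightarrow> w \<in> wr (m + d - 1) H \<Longrightarrow>
     spl d G H n (gmult d G X (cls d G (caretF d m k, w, triv (m + d - 1))))"

definition splitting :: "nat \<Rightarrow> (nat list \<Rightarrow> nat list) set \<Rightarrow> (nat list \<Rightarrow> nat list) set
                         \<Rightarrow> triple set \<Rightarrow> bool" where
  "splitting d G H X \<longleftrightarrow> (\<exists>n. spl d G H n X)"

definition ple :: "nat \<Rightarrow> (nat list \<Rightarrow> nat list) set \<Rightarrow> (nat list \<Rightarrow> nat list) set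
                   \<Rightarrow> triple set set \<Rightarrow> triple set set \<Rightarrow> bool" where
  "ple d G H P Q \<longleftrightarrow> (\<exists>x y. x \<in> grpd d G \<and> y \<in> grpd d G \<and> P = coset d G H x \<and> Q = coset d G H y
                       \<and> splitting d G H (gmult d G (ginv d G x) y))"

definition pless :: "nat \<Rightarrow> (nat list \<Rightarrow> nat list) set \<Rightarrow> (nat list \<Rightarrow> nat list) set
                   \<Rightarrow> triple set set \<Rightarrow> triple set set \<Rightarrow> bool" where
  "pless d G H P Q \<longleftrightarrow> ple d G H P Q \<and> P \<noteq> Q"

definition has_phi :: "nat \<Rightarrow> (nat list \<Rightarrow> nat list) set \<Rightarrow> (nat list \<Rightarrow> nat list) set
                       \<Rightarrow> triple set set \<Rightarrow> nat \<Rightarrow> bool" where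
  "has_phi d G H P q \<longleftrightarrow> (\<exists>x\<in>grpd d G. P = coset d G H x \<and> has_feet x q)"

end

theory Submission
  imports Defs
begin

fun plc :: "tree \<Rightarrow> nat \<Rightarrow> nat list"
and plcL :: "tree list \<Rightarrow> nat \<Rightarrow> nat \<times> nat list" where
  "plc Lf i = []"
| "plc (Nd ts) i = (case plcL ts i of (x, u) \<Rightarrow> x # u)"
| "plcL [] i = (0, [])"
| "plcL (t # ts) i = (if i < nleaves t then (0, plc t i) else apfst Suc (plcL ts (i - nleaves t)))"

fun loc :: "tree \<Rightarrow> nat list \<Rightarrow> (nat \<times> nat list) option"
and locL :: "tree list \<Rightarrow> nat \<Rightarrow> nat list \<Rightarrow> (nat \<times> nat list) option" where
  "loc Lf w = Some (0, w)"
| "loc (Nd ts) [] = None"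
| "loc (Nd ts) (x # w) = locL ts x w"
| "locL [] x w = None"
| "locL (t # ts) x w = (if x = 0 then loc t w
      else map_option (apfst ((+) (nleaves t))) (locL ts (x - 1) w))"

fun hgt :: "tree \<Rightarrow> nat" and hgtL :: "tree list \<Rightarrow> nat" where
  "hgt Lf = 0"
| "hgt (Nd ts) = Suc (hgtL ts)"
| "hgtL [] = 0"
| "hgtL (t # ts) = max (hgt t) (hgtL ts)"

lemma fleaves_Nil[simp]: "fleaves [] = 0" and fleaves_Cons[simp]: "fleaves (t # ts) = nleaves t + fleaves ts"
  by (simp_all add: fleaves_def)

lemma nleaves_Nd: "nleaves (Nd ts) = fleaves ts"
  by (simp add: fleaves_def)

lemma sum_nleaves[simp]: "sum_list (map nleaves ts) = fleaves ts"
  by (simp add: fleaves_def)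

lemma fleaves_append[simp]: "fleaves (F @ G) = fleaves F + fleaves G"
  unfolding fleaves_def by (simp del: sum_nleaves)

lemma loc_plc:
  "i < nleaves t \<Longrightarrow> loc t (plc t i @ v) = Some (i, v)"
  "i < fleaves ts \<Longrightarrow> plcL ts i = (x, u) \<Longrightarrow> locL ts x (u @ v) = Some (i, v)"
proof (induction t i and ts i arbitrary: v and x u v rule: plc_plcL.induct)
  case (1 i)
  then show ?case by simp
next
  case (2 ts i)
  then show ?case by (auto simp: nleaves_Nd split: prod.splits)
next
  case (3 i)
  then show ?case by simp
next
  case (4 t ts i)
  show ?case
  proof (cases "i < nleaves t")
    case True
    then show ?thesis using 4 by auto
  next
    case False
    then obtain x' where "plcL ts (i - nleaves t) = (x', u)" "x = Suc x'"
      using 4(4) by (cases "plcL ts (i - nleaves t)") auto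
    then show ?thesis using 4 False by auto
  qed
qed

lemma loc_Some:
  "loc t w = Some (j, v) \<Longrightarrow> j < nleaves t \<and> w = plc t j @ v"
  "locL ts x w = Some (j, v) \<Longrightarrow> j < fleaves ts \<and> (\<exists>u. plcL ts j = (x, u) \<and> w = u @ v)"
proof (induction t w and ts x w arbitrary: j v and j v rule: loc_locL.induct)
  case (1 w)
  then show ?case by simp
next
  case (2 ts)
  then show ?case by simp
next
  case (3 ts x w)
  then show ?case by (auto simp: nleaves_Nd)
next
  case (4 x w)
  then show ?case by simp
next
  case (5 t ts x w)
  show ?case
  proof (cases "x = 0")
    case True
    then show ?thesis using 5 by auto
  next
    case False
    then obtain j' where j': "locL ts (x - 1) w = Some (j', v)" "j = nleaves t + j'"
      using 5(3) by auto
    from 5(2)[OF False j'(1)] obtain u where "j' < fleaves ts" "plcL ts j' = (x - 1, u)" "w = u @ v"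
      by blast
    then show ?thesis using j' False by auto
  qed
qed

lemma plcL_of_locL: "locL ts x u = Some (i, []) \<Longrightarrow> plcL ts i = (x, u)"
  using loc_Some(2) by fastforce

lemma plcL_inj: "i < fleaves ts \<Longrightarrow> i' < fleaves ts \<Longrightarrow> plcL ts i = plcL ts i' \<Longrightarrow> i = i'"
  by (metis loc_plc(2) option.inject prod.inject surj_pair)

lemma locL_plcL_Some:
  "i < fleaves ts \<Longrightarrow> plcL ts i = (x, u) \<Longrightarrow> locL ts x u = Some (i, [])"
  using loc_plc(2)[of i ts x u "[]"] by simp

lemma locL_nth:
  "x < length ts \<Longrightarrow> locL ts x w = map_option (apfst ((+) (fleaves (take x ts)))) (loc (ts ! x) w)"
proof (induction ts arbitrary: x)
  case Nil then show ?case by simp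
next
  case (Cons t ts)
  show ?case
  proof (cases x)
    case 0 then show ?thesis by (simp add: option.map_ident apfst_def map_prod_def)
  next
    case (Suc x')
    then show ?thesis using Cons by (auto simp: option.map_comp comp_def apfst_def map_prod_def
       intro!: option.map_cong split: prod.splits)
  qed
qed

lemma locL_ge: "length ts \<le> x \<Longrightarrow> locL ts x w = None"
  by (induction ts arbitrary: x) auto

lemma plcL_fst: "i < fleaves ts \<Longrightarrow> fst (plcL ts i) < length ts"
proof (induction ts arbitrary: i)
  case Nil then show ?case by simp
next
  case (Cons t ts)
  show ?case
  proof (cases "i < nleaves t")
    case True then show ?thesis by simp
  next
    case False
    then have "fst (plcL ts (i - nleaves t)) < length ts" using Cons by auto
    then show ?thesis using False by (cases "plcL ts (i - nleaves t)") auto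
  qed
qed

definition ashift :: "nat \<Rightarrow> nat \<Rightarrow> (nat \<times> nat list) option \<Rightarrow> (nat \<times> nat list) option" where
  "ashift d k oo = (case oo of None \<Rightarrow> None | Some (j, v) \<Rightarrow>
     if j < k then Some (j, v) else if k < j then Some (j + (d - 1), v)
     else (case v of [] \<Rightarrow> None | y # v' \<Rightarrow> if y < d then Some (k + y, v') else None))"

lemma locL_rep: "locL (replicate d Lf) y w = (if y < d then Some (y, w) else None)"
  by (induction d arbitrary: y) auto

lemma nleaves_rep: "fleaves (replicate d Lf) = d"
  by (induction d) auto

lemma nleaves_rep': "sum_list (replicate d (Suc 0)) = d"
  by (induction d) auto

lemma nleaves_attach:
  "0 < d \<Longrightarrow> k < nleaves t \<Longrightarrow> nleaves (attach d k t) = nleaves t + (d - 1)"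
  "0 < d \<Longrightarrow> k < fleaves ts \<Longrightarrow> fleaves (attachF d k ts) = fleaves ts + (d - 1)"
  by (induction d k t and d k ts rule: attach_attachF.induct) (auto simp: nleaves_rep nleaves_rep')

lemma length_attachF[simp]: "length (attachF d k ts) = length ts"
  by (induction ts arbitrary: k) auto

lemma full_attach:
  "full d t \<Longrightarrow> full d (attach d k t)"
  "(\<forall>t\<in>set ts. full d t) \<Longrightarrow> (\<forall>t\<in>set (attachF d k ts). full d t)"
  by (induction d k t and d k ts rule: attach_attachF.induct) auto

lemma loc_attach:
  "0 < d \<Longrightarrow> k < nleaves t \<Longrightarrow> loc (attach d k t) w = ashift d k (loc t w)"
  "0 < d \<Longrightarrow> k < fleaves ts \<Longrightarrow> locL (attachF d k ts) x w = ashift d k (locL ts x w)"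
proof (induction d k t and d k ts arbitrary: w and x w rule: attach_attachF.induct)
  case (1 d k)
  then show ?case by (cases w) (auto simp: ashift_def locL_rep)
next
  case (2 d k ts)
  then show ?case by (cases w) (auto simp: ashift_def nleaves_Nd)
next
  case (3 d k)
  then show ?case by simp
next
  case (4 d k t ts)
  show ?case
  proof (cases "k < nleaves t")
    case True
    show ?thesis
    proof (cases "x = 0")
      case True
      then show ?thesis using 4 \<open>k < nleaves t\<close> by simp
    next
      case False
      then show ?thesis using True nleaves_attach(1)[OF 4(3) True]
        by (cases "locL ts (x - 1) w") (auto simp: ashift_def)
    qed
  next
    case False
    show ?thesis
    proof (cases "x = 0")
      case True
      then show ?thesis using False loc_Some(1)[of t w]
        by (cases "loc t w") (auto simp: ashift_def)
    next
      case xF: False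
      have IH: "locL (attachF d (k - nleaves t) ts) (x - 1) w = ashift d (k - nleaves t) (locL ts (x - 1) w)"
        using 4(2)[OF False] 4(3,4) False by simp
      show ?thesis using False xF IH
        by (cases "locL ts (x - 1) w") (auto simp: ashift_def split: list.splits)
    qed
  qed
qed

lemma plcL_attach:
  assumes "0 < d" "k < fleaves ts" "i < fleaves ts + (d - 1)"
  shows "plcL (attachF d k ts) i = (if i < k then plcL ts i else if i < k + d
            then apsnd (\<lambda>u. u @ [i - k]) (plcL ts k) else plcL ts (i - (d - 1)))"
proof -
  consider (a) "i < k" | (b) "k \<le> i" "i < k + d" | (c) "k + d \<le> i" by linarith
  then show ?thesis
  proof cases
    case a
    obtain x u where xu: "plcL ts i = (x, u)" by (cases "plcL ts i")
    have "locL ts x u = Some (i, [])" using locL_plcL_Some[OF _ xu] a assms by simp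
    then have "locL (attachF d k ts) x u = Some (i, [])"
      using loc_attach(2)[OF assms(1,2)] a by (simp add: ashift_def)
    then show ?thesis using plcL_of_locL a xu by simp
  next
    case b
    obtain x u where xu: "plcL ts k = (x, u)" by (cases "plcL ts k")
    have "locL ts x (u @ [i - k]) = Some (k, [i - k])" using loc_plc(2)[OF assms(2) xu] .
    then have "locL (attachF d k ts) x (u @ [i - k]) = Some (i, [])"
      using loc_attach(2)[OF assms(1,2)] b by (simp add: ashift_def)
    then show ?thesis using plcL_of_locL b xu by simp
  next
    case c
    obtain x u where xu: "plcL ts (i - (d - 1)) = (x, u)" by (cases "plcL ts (i - (d - 1))")
    have "locL ts x u = Some (i - (d - 1), [])" using locL_plcL_Some[OF _ xu] c assms by simp
    moreover have "k < i - (d - 1)" "i - (d - 1) + (d - 1) = i" using c assms(1) by linarith+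
    ultimately have "locL (attachF d k ts) x u = Some (i, [])"
      using loc_attach(2)[OF assms(1,2)] by (simp add: ashift_def)
    then show ?thesis using plcL_of_locL c xu assms(1) by simp
  qed
qed

lemma loc_total:
  "full d t \<Longrightarrow> set w \<subseteq> {0..<d} \<Longrightarrow> hgt t \<le> length w \<Longrightarrow> loc t w \<noteq> None"
  "(\<forall>t\<in>set ts. full d t) \<Longrightarrow> x < length ts \<Longrightarrow> set w \<subseteq> {0..<d} \<Longrightarrow> hgtL ts \<le> length w \<Longrightarrow> locL ts x w \<noteq> None"
proof (induction t w and ts x w rule: loc_locL.induct)
  case (5 t ts x w)
  show ?case
  proof (cases "x = 0")
    case True then show ?thesis using 5 by auto
  next
    case False
    then have "locL ts (x - 1) w \<noteq> None" using 5 by auto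
    then show ?thesis using False by auto
  qed
qed auto

lemma plc_len:
  "length (plc t i) \<le> hgt t"
  "length (snd (plcL ts i)) \<le> hgtL ts"
proof (induction t i and ts i rule: plc_plcL.induct)
  case (2 ts i) then show ?case by (cases "plcL ts i") auto
next
  case (4 t ts i) then show ?case by (cases "plcL ts (i - nleaves t)") auto
qed auto

lemma plc_set:
  "full d t \<Longrightarrow> i < nleaves t \<Longrightarrow> set (plc t i) \<subseteq> {0..<d}"
  "(\<forall>t\<in>set ts. full d t) \<Longrightarrow> i < fleaves ts \<Longrightarrow> set (snd (plcL ts i)) \<subseteq> {0..<d}"
proof (induction t i and ts i rule: plc_plcL.induct)
  case (2 ts i)
  have a: "fst (plcL ts i) < d" using plcL_fst[of i ts] 2 by (simp add: nleaves_Nd)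
  have b: "set (snd (plcL ts i)) \<subseteq> {0..<d}" using 2 by (simp add: nleaves_Nd)
  show ?case using a b by (cases "plcL ts i") auto
next
  case (4 t ts i) then show ?case by (cases "plcL ts (i - nleaves t)") auto
qed auto

lemma locL_len: "locL ts x w = Some (j, v) \<Longrightarrow> length w \<le> hgtL ts + length v"
  using loc_Some(2)[of ts x w j v] plc_len(2)[of ts j] by auto

lemma locL_suffix: "locL ts x w = Some (j, v) \<Longrightarrow> set v \<subseteq> set w"
  using loc_Some(2)[of ts x w j v] by auto


lemma words_iff: "w \<in> words d \<longleftrightarrow> set w \<subseteq> {0..<d}"
  by (auto simp: words_def)

lemma aut_words: "f \<in> aut d \<Longrightarrow> w \<in> words d \<Longrightarrow> f w \<in> words d"
  unfolding aut_def bij_betw_def by auto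

lemma aut_len: "f \<in> aut d \<Longrightarrow> w \<in> words d \<Longrightarrow> length (f w) = length w"
  unfolding aut_def by auto

lemma aut_off: "f \<in> aut d \<Longrightarrow> w \<notin> words d \<Longrightarrow> f w = w"
  unfolding aut_def by auto

lemma aut_inj: "f \<in> aut d \<Longrightarrow> inj_on f (words d)"
  unfolding aut_def bij_betw_def by auto

lemma aut_pref: "f \<in> aut d \<Longrightarrow> u \<in> words d \<Longrightarrow> v \<in> words d \<Longrightarrow> take (length u) (f (u @ v)) = f u"
  unfolding aut_def by auto

lemma aut_app: "f \<in> aut d \<Longrightarrow> u \<in> words d \<Longrightarrow> v \<in> words d \<Longrightarrow> \<exists>v'. f (u @ v) = f u @ v' \<and> length v' = length v"
proof -
  assume a: "f \<in> aut d" "u \<in> words d" "v \<in> words d"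
  have uv: "u @ v \<in> words d" using a by (auto simp: words_iff)
  have "f (u @ v) = take (length u) (f (u @ v)) @ drop (length u) (f (u @ v))" by simp
  then show ?thesis using aut_pref[OF a] aut_len[OF a(1) uv] by (metis length_append length_drop diff_add_inverse)
qed

lemma rho_cons:
  assumes "f \<in> aut d" "x < d" "v \<in> words d"
  shows "f (x # v) = rho d f x # state d f x v" "rho d f x < d"
proof -
  have x: "[x] \<in> words d" using assms by (simp add: words_iff)
  have xv: "x # v \<in> words d" using assms by (simp add: words_iff)
  have l1: "length (f [x]) = 1" using aut_len[OF assms(1) x] by simp
  then obtain y where y: "f [x] = [y]" by (cases "f [x]") auto
  have "f [x] \<in> words d" using aut_words[OF assms(1) x] .
  then show "rho d f x < d" using y assms by (simp add: rho_def words_iff)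
  have "take 1 (f (x # v)) = [y]" using aut_pref[OF assms(1) x assms(3)] y by simp
  moreover have "f (x # v) \<noteq> []" using aut_len[OF assms(1) xv] by auto
  ultimately have "f (x # v) = y # tl (f (x # v))" by (cases "f (x # v)") auto
  then show "f (x # v) = rho d f x # state d f x v" using y assms by (simp add: rho_def state_def)
qed

lemma rho_permutes:
  assumes "f \<in> aut d"
  shows "rho d f permutes {0..<d}"
proof -
  have m: "\<forall>x\<in>{0..<d}. rho d f x \<in> {0..<d}" using rho_cons(2)[OF assms, of _ "[]"] by (auto simp: words_iff)
  have "inj_on (rho d f) {0..<d}"
  proof
    fix x y assume xy: "x \<in> {0..<d}" "y \<in> {0..<d}" "rho d f x = rho d f y"
    have lx: "length (f [x]) = 1" "length (f [y]) = 1" using aut_len[OF assms] xy by (auto simp: words_iff)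
    have "f (x # []) = f (y # [])" using rho_cons(1)[OF assms, of x "[]"] rho_cons(1)[OF assms, of y "[]"] xy lx
      by (auto simp: words_iff state_def) (metis length_0_conv length_tl diff_Suc_1)
    moreover have "[x] \<in> words d" "[y] \<in> words d" using xy by (auto simp: words_iff)
    ultimately show "x = y" using aut_inj[OF assms] by (auto dest: inj_onD)
  qed
  then have "bij_betw (rho d f) {0..<d} {0..<d}" using m
    by (metis bij_betw_def endo_inj_surj finite_atLeastLessThan image_subsetI)
  moreover have "\<forall>x. x \<notin> {0..<d} \<longrightarrow> rho d f x = x" by (auto simp: rho_def)
  ultimately show ?thesis using bij_imp_permutes by blast
qed

lemma state_words: "f \<in> aut d \<Longrightarrow> x < d \<Longrightarrow> v \<in> words d \<Longrightarrow> state d f x v \<in> words d"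
  using aut_words[of f d "x # v"] by (cases "f (x # v)") (auto simp: state_def words_iff)

lemma valid_iff: "valid d G (Fm, (\<sigma>, fs), Fp) \<longleftrightarrow> forest d Fm \<and> forest d Fp \<and> fleaves Fm = length fs
   \<and> fleaves Fp = length fs \<and> \<sigma> permutes {0..<length fs} \<and> set fs \<subseteq> G"
  by (simp add: valid_def wr_def)

lemma lift_permutes:
  assumes "\<tau> permutes {0..<d}" "k + d \<le> N"
  shows "lift d k \<tau> permutes {0..<N}"
proof -
  have t: "\<And>j. j < d \<Longrightarrow> \<tau> j < d" using assms(1) permutes_in_image by fastforce
  have m: "\<forall>i\<in>{k..<k+d}. lift d k \<tau> i \<in> {k..<k+d}" using t by (auto simp: lift_def)
  have "inj_on (lift d k \<tau>) {k..<k+d}"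
  proof
    fix i j assume ij: "i \<in> {k..<k+d}" "j \<in> {k..<k+d}" "lift d k \<tau> i = lift d k \<tau> j"
    then have "\<tau> (i - k) = \<tau> (j - k)" by (auto simp: lift_def)
    then have "i - k = j - k" using permutes_inj[OF assms(1)] by (auto dest: injD)
    then show "i = j" using ij by auto
  qed
  then have "bij_betw (lift d k \<tau>) {k..<k+d} {k..<k+d}" using m
    by (metis bij_betw_def endo_inj_surj finite_atLeastLessThan image_subsetI)
  moreover have "\<forall>x. x \<notin> {k..<k+d} \<longrightarrow> lift d k \<tau> x = x" by (auto simp: lift_def)
  ultimately have "lift d k \<tau> permutes {k..<k+d}" using bij_imp_permutes by blast
  then show ?thesis by (rule permutes_subset) (use assms in auto)
qed

lemma varsigma_permutes:
  assumes "\<sigma> permutes {0..<n}" "k < n" "0 < d"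
  shows "varsigma d n \<sigma> k permutes {0..<n + d - 1}"
proof -
  define sh where "sh = (\<lambda>v. if v < \<sigma> k then v else v + (d - 1))"
  define c where "c = (\<lambda>i::nat. if i < k then i else i - (d - 1))"
  have vs: "varsigma d n \<sigma> k = (\<lambda>i. if k \<le> i \<and> i < k + d then \<sigma> k + (i - k)
       else if i < n + d - 1 then sh (\<sigma> (c i)) else i)"
    using assms by (intro ext) (auto simp: varsigma_def sh_def c_def Let_def)
  have sl: "\<And>i. i < n \<Longrightarrow> \<sigma> i < n" using assms(1) permutes_in_image by fastforce
  have si: "\<And>i j. i < n \<Longrightarrow> j < n \<Longrightarrow> \<sigma> i = \<sigma> j \<Longrightarrow> i = j"
    using permutes_inj[OF assms(1)] by (auto dest: injD)
  have skn: "\<sigma> k < n" using sl assms by auto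
  have shinj: "\<And>a b. sh a = sh b \<Longrightarrow> a = b" unfolding sh_def by (auto split: if_splits)
  have shout: "\<And>v t. v \<noteq> \<sigma> k \<Longrightarrow> t < d \<Longrightarrow> sh v \<noteq> \<sigma> k + t" unfolding sh_def by auto
  have cr: "\<And>i. \<not> (k \<le> i \<and> i < k + d) \<Longrightarrow> i < n + d - 1 \<Longrightarrow> c i < n \<and> c i \<noteq> k"
    unfolding c_def using assms by auto
  have cinj: "\<And>i j. \<not> (k \<le> i \<and> i < k + d) \<Longrightarrow> \<not> (k \<le> j \<and> j < k + d) \<Longrightarrow> c i = c j \<Longrightarrow> i = j"
    unfolding c_def using assms by (auto split: if_splits)
  have m: "\<forall>i\<in>{0..<n+d-1}. varsigma d n \<sigma> k i \<in> {0..<n+d-1}"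
  proof
    fix i assume i: "i \<in> {0..<n+d-1}"
    show "varsigma d n \<sigma> k i \<in> {0..<n+d-1}"
    proof (cases "k \<le> i \<and> i < k + d")
      case True then show ?thesis using skn by (auto simp: vs)
    next
      case False
      then have "c i < n" using cr i by auto
      then have "\<sigma> (c i) < n" using sl by auto
      then show ?thesis using False i assms(3) by (auto simp: vs sh_def)
    qed
  qed
  have "inj_on (varsigma d n \<sigma> k) {0..<n+d-1}"
  proof
    fix i j assume ij: "i \<in> {0..<n+d-1}" "j \<in> {0..<n+d-1}" "varsigma d n \<sigma> k i = varsigma d n \<sigma> k j"
    show "i = j"
    proof (cases "k \<le> i \<and> i < k + d")
      case Ti: True
      show ?thesis
      proof (cases "k \<le> j \<and> j < k + d")
        case True then show ?thesis using Ti ij by (auto simp: vs)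
      next
        case False
        then have "c j < n" "c j \<noteq> k" using cr ij by auto
        then have "\<sigma> (c j) \<noteq> \<sigma> k" using si assms by metis
        then have "sh (\<sigma> (c j)) \<noteq> \<sigma> k + (i - k)" using shout[of "\<sigma> (c j)" "i - k"] Ti by linarith
        then show ?thesis using Ti False ij by (auto simp: vs)
      qed
    next
      case Fi: False
      then have ci: "c i < n" "c i \<noteq> k" using cr ij by auto
      then have sci: "\<sigma> (c i) \<noteq> \<sigma> k" using si assms by metis
      show ?thesis
      proof (cases "k \<le> j \<and> j < k + d")
        case True
        then have "sh (\<sigma> (c i)) \<noteq> \<sigma> k + (j - k)" using shout[of "\<sigma> (c i)" "j - k"] sci by linarith
        then show ?thesis using Fi True ij by (auto simp: vs)
      next
        case False
        then have cj: "c j < n" using cr ij by auto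
        have "sh (\<sigma> (c i)) = sh (\<sigma> (c j))" using Fi False ij by (auto simp: vs)
        then have "\<sigma> (c i) = \<sigma> (c j)" using shinj by blast
        then have "c i = c j" using si ci cj by blast
        then show ?thesis using cinj Fi False by blast
      qed
    qed
  qed
  then have "bij_betw (varsigma d n \<sigma> k) {0..<n+d-1} {0..<n+d-1}" using m
    by (metis bij_betw_def endo_inj_surj finite_atLeastLessThan image_subsetI)
  moreover have "\<forall>x. x \<notin> {0..<n+d-1} \<longrightarrow> varsigma d n \<sigma> k x = x" using assms by (auto simp: varsigma_def Let_def)
  ultimately show ?thesis using bij_imp_permutes by blast
qed

lemma kappa_wr:
  assumes "(\<sigma>, fs) \<in> wr n G" "k < n" "0 < d" "G \<subseteq> aut d" "self_similar d G"
  shows "kappa d (\<sigma>, fs) k \<in> wr (n + d - 1) G"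
proof -
  have s: "\<sigma> permutes {0..<n}" and l: "length fs = n" and g: "set fs \<subseteq> G" using assms(1) by (auto simp: wr_def)
  have fk: "fs ! k \<in> G" using g l assms(2) by auto
  have p1: "varsigma d n \<sigma> k permutes {0..<n + d - 1}" using varsigma_permutes[OF s assms(2,3)] .
  have p2: "lift d k (rho d (fs ! k)) permutes {0..<n + d - 1}"
    using lift_permutes[OF rho_permutes] fk assms by auto
  have "set (map (state d (fs ! k)) [0..<d]) \<subseteq> G" using assms(5) fk by (auto simp: self_similar_def)
  moreover have "set (take k fs) \<subseteq> G" "set (drop (Suc k) fs) \<subseteq> G" using g by (auto dest: in_set_takeD in_set_dropD)
  ultimately show ?thesis using p1 p2 l assms(2,3)
    by (auto simp: wr_def kappa_def intro: permutes_compose)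
qed

lemma forest_attachF: "forest d F \<Longrightarrow> forest d (attachF d k F)"
  using full_attach(2) by (auto simp: forest_def)

lemma valid_expand:
  assumes "valid d G t" "k < length (snd (fst (snd t)))" "0 < d" "G \<subseteq> aut d" "self_similar d G"
  shows "valid d G (expand d t k)"
proof -
  obtain Fm \<sigma> fs Fp where t: "t = (Fm, (\<sigma>, fs), Fp)" by (cases t) auto
  have v: "forest d Fm" "forest d Fp" "fleaves Fm = length fs" "fleaves Fp = length fs"
     "\<sigma> permutes {0..<length fs}" "set fs \<subseteq> G" using assms(1) by (auto simp: t valid_iff)
  have k: "k < length fs" using assms(2) t by simp
  have sk: "\<sigma> k < length fs" using v(5) k permutes_in_image by fastforce
  have kw: "kappa d (\<sigma>, fs) k \<in> wr (length fs + d - 1) G"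
    using kappa_wr[of \<sigma> fs "length fs" G k d] v k assms by (auto simp: wr_def)
  have lk: "length (snd (kappa d (\<sigma>, fs) k)) = length fs + d - 1" using kw by (auto simp: wr_def)
  show ?thesis using kw lk v k sk assms(3) nleaves_attach(2)[of d k Fp] nleaves_attach(2)[of d "\<sigma> k" Fm]
    by (auto simp: t expand_def valid_def forest_attachF)
qed

definition sem :: "triple \<Rightarrow> nat \<Rightarrow> nat list \<Rightarrow> (nat \<times> nat list) option" where
  "sem t r w = (case t of (Fm, (\<sigma>, fs), Fp) \<Rightarrow> (case locL Fp r w of None \<Rightarrow> None
     | Some (j, v) \<Rightarrow> Some (apsnd (\<lambda>u. u @ (fs ! j) v) (plcL Fm (\<sigma> j)))))"

lemma sem_expand:
  assumes "valid d G t" "G \<subseteq> aut d" "0 < d" "k < length (snd (fst (snd t)))" "w \<in> words d"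
    and ne: "sem (expand d t k) r w \<noteq> None"
  shows "sem (expand d t k) r w = sem t r w"
proof -
  obtain Fm \<sigma> fs Fp where t: "t = (Fm, (\<sigma>, fs), Fp)" by (cases t) auto
  have v: "forest d Fm" "forest d Fp" "fleaves Fm = length fs" "fleaves Fp = length fs"
     "\<sigma> permutes {0..<length fs}" "set fs \<subseteq> G" using assms(1) by (auto simp: t valid_iff)
  define n where "n = length fs"
  have k: "k < n" using assms(4) t n_def by simp
  have sl: "\<And>i. i < n \<Longrightarrow> \<sigma> i < n" using v(5) permutes_in_image n_def by fastforce
  have si: "\<And>i j. \<sigma> i = \<sigma> j \<Longrightarrow> i = j"
    using permutes_inj[OF v(5)] by (auto dest: injD)
  define \<rho> where "\<rho> = rho d (fs ! k)"
  have fk: "fs ! k \<in> aut d" using v(6) k assms(2) n_def nth_mem by blast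
  have ex: "expand d t k = (attachF d (\<sigma> k) Fm, (varsigma d n \<sigma> k \<circ> lift d k \<rho>,
      take k fs @ map (state d (fs ! k)) [0..<d] @ drop (Suc k) fs), attachF d k Fp)"
    by (simp add: t expand_def kappa_def n_def \<rho>_def)
  have la: "locL (attachF d k Fp) r w = ashift d k (locL Fp r w)"
    using loc_attach(2)[OF assms(3)] k v(4) n_def by simp
  have pa: "\<And>i. i < n + (d - 1) \<Longrightarrow> plcL (attachF d (\<sigma> k) Fm) i = (if i < \<sigma> k then plcL Fm i else if i < \<sigma> k + d
            then apsnd (\<lambda>u. u @ [i - \<sigma> k]) (plcL Fm (\<sigma> k)) else plcL Fm (i - (d - 1)))"
    using plcL_attach[OF assms(3)] sl k v(3) n_def by simp
  have sh: "\<And>j. j < n \<Longrightarrow> j \<noteq> k \<Longrightarrow> plcL (attachF d (\<sigma> k) Fm) (if \<sigma> j < \<sigma> k then \<sigma> j else \<sigma> j + (d - 1)) = plcL Fm (\<sigma> j)"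
  proof -
    fix j assume j: "j < n" "j \<noteq> k"
    have "\<sigma> j \<noteq> \<sigma> k" using si j by metis
    then show "plcL (attachF d (\<sigma> k) Fm) (if \<sigma> j < \<sigma> k then \<sigma> j else \<sigma> j + (d - 1)) = plcL Fm (\<sigma> j)"
      using pa[of "\<sigma> j"] pa[of "\<sigma> j + (d - 1)"] sl[OF j(1)] assms(3) by auto
  qed
  obtain j v' where jv: "locL Fp r w = Some (j, v')" using ne la by (cases "locL Fp r w") (auto simp: sem_def ex ashift_def)
  have jn: "j < n" using loc_Some(2)[OF jv] v(4) n_def by simp
  have v'w: "v' \<in> words d" using locL_suffix[OF jv] assms(5) by (auto simp: words_iff)
  have old: "sem t r w = Some (apsnd (\<lambda>u. u @ (fs ! j) v') (plcL Fm (\<sigma> j)))"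
    by (simp add: sem_def t jv)
  consider (a) "j < k" | (b) "k < j" | (c) "j = k" by linarith
  then show ?thesis
  proof cases
    case a
    have "(varsigma d n \<sigma> k \<circ> lift d k \<rho>) j = (if \<sigma> j < \<sigma> k then \<sigma> j else \<sigma> j + (d - 1))"
      using a by (simp add: varsigma_def lift_def Let_def)
    moreover have "(take k fs @ map (state d (fs ! k)) [0..<d] @ drop (Suc k) fs) ! j = fs ! j"
      using a k n_def by (simp add: nth_append)
    ultimately show ?thesis using a jv la sh[OF jn] old by (simp add: sem_def ex ashift_def)
  next
    case b
    have l: "lift d k \<rho> (j + (d - 1)) = j + (d - 1)" proof -
      have "\<not> (k \<le> j + (d - 1) \<and> j + (d - 1) < k + d)" using b assms(3) by linarith
      then show ?thesis unfolding lift_def by (simp only: if_not_P if_False)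
    qed
    have f: "\<not> j + (d - 1) < k" "\<not> j + (d - 1) < k + d" "j + (d - 1) < n + d - 1" "j + (d - 1) - (d - 1) = j"
      using b jn assms(3) by linarith+
    have e1: "(varsigma d n \<sigma> k \<circ> lift d k \<rho>) (j + (d - 1)) = (if \<sigma> j < \<sigma> k then \<sigma> j else \<sigma> j + (d - 1))"
      unfolding comp_def l varsigma_def Let_def using f by (simp only: if_False if_True)
    have e2: "(take k fs @ map (state d (fs ! k)) [0..<d] @ drop (Suc k) fs) ! (j + (d - 1)) = fs ! j"
    proof -
      have lt: "length (take k fs) = k" using k n_def by simp
      have i1: "\<not> j + (d - 1) < k" "\<not> j + (d - 1) - k < d" using b assms(3) by linarith+
      have i2: "Suc k + (j + (d - 1) - k - d) = j" using b assms(3) by linarith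
      have "(take k fs @ map (state d (fs ! k)) [0..<d] @ drop (Suc k) fs) ! (j + (d - 1))
           = drop (Suc k) fs ! (j + (d - 1) - k - d)"
        using i1 lt by (simp add: nth_append)
      also have "\<dots> = fs ! j" using i2 jn n_def k by simp
      finally show ?thesis .
    qed
    show ?thesis using b jv la sh[OF jn] old e1 e2 by (simp add: sem_def ex ashift_def)
  next
    case c
    obtain y v'' where yv: "v' = y # v''" "y < d"
      using ne la jv c by (auto simp: sem_def ex ashift_def split: list.splits if_splits)
    have v''w: "v'' \<in> words d" using v'w yv by (simp add: words_iff)
    have rc: "(fs ! k) (y # v'') = \<rho> y # state d (fs ! k) y v''" "\<rho> y < d"
      using rho_cons[OF fk yv(2) v''w] by (simp_all add: \<rho>_def)
    have e1: "(varsigma d n \<sigma> k \<circ> lift d k \<rho>) (k + y) = \<sigma> k + \<rho> y"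
      using yv rc(2) by (simp add: varsigma_def lift_def Let_def)
    have e2: "(take k fs @ map (state d (fs ! k)) [0..<d] @ drop (Suc k) fs) ! (k + y) = state d (fs ! k) y"
      using yv k n_def by (simp add: nth_append)
    have e3: "plcL (attachF d (\<sigma> k) Fm) (\<sigma> k + \<rho> y) = apsnd (\<lambda>u. u @ [\<rho> y]) (plcL Fm (\<sigma> k))"
      using pa[of "\<sigma> k + \<rho> y"] rc(2) sl[OF k] by simp
    show ?thesis using c jv la old e1 e2 e3 yv rc(1)
      by (simp add: sem_def ex ashift_def apsnd_def map_prod_def split: prod.splits)
  qed
qed


lemma sem_None: "length Fp \<le> r \<Longrightarrow> sem (Fm, f, Fp) r w = None"
  by (cases f) (simp add: sem_def locL_ge)

lemma sem_total:
  assumes "valid d G (Fm, f, Fp)" "w \<in> words d" "r < length Fp" "hgtL Fp \<le> length w"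
  shows "sem (Fm, f, Fp) r w \<noteq> None"
proof -
  have "forest d Fp" using assms(1) by (cases f) (simp add: valid_iff)
  then have "locL Fp r w \<noteq> None" using loc_total(2)[of Fp d r w] assms by (auto simp: forest_def words_iff)
  then show ?thesis by (cases f) (auto simp: sem_def)
qed

definition sem_eq :: "nat \<Rightarrow> triple \<Rightarrow> triple \<Rightarrow> bool" where
  "sem_eq d t t' \<longleftrightarrow> (\<exists>N. \<forall>r w. w \<in> words d \<longrightarrow> N \<le> length w \<longrightarrow> sem t r w = sem t' r w)"

lemma sem_eq_refl: "sem_eq d t t"
  by (auto simp: sem_eq_def)

lemma sem_eq_sym: "sem_eq d t t' \<Longrightarrow> sem_eq d t' t"
  by (auto simp: sem_eq_def) metis

lemma sem_eq_trans: "sem_eq d t t' \<Longrightarrow> sem_eq d t' t'' \<Longrightarrow> sem_eq d t t''"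
  unfolding sem_eq_def by (metis max.bounded_iff)

lemma sem_eq_expand:
  assumes "valid d G t" "G \<subseteq> aut d" "0 < d" "k < length (snd (fst (snd t)))" "self_similar d G"
  shows "sem_eq d t (expand d t k)"
proof -
  obtain Fm f Fp where t: "t = (Fm, f, Fp)" by (cases t) auto
  obtain Fm' f' Fp' where e: "expand d t k = (Fm', f', Fp')" by (cases "expand d t k") auto
  have Fp': "Fp' = attachF d k Fp" using e t by (simp add: expand_def split: prod.splits)
  have ve: "valid d G (Fm', f', Fp')" using valid_expand[OF assms(1,4,3,2,5)] e by simp
  show ?thesis unfolding sem_eq_def
  proof (intro exI allI impI)
    fix r w assume w: "w \<in> words d" "hgtL Fp' \<le> length w"
    show "sem t r w = sem (expand d t k) r w"
    proof (cases "r < length Fp")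
      case True
      then have "sem (expand d t k) r w \<noteq> None" using sem_total[OF ve w(1) _ w(2)] e Fp' by simp
      then show ?thesis using sem_expand[OF assms(1,2,3,4) w(1)] by simp
    next
      case False
      then show ?thesis using e t Fp' by (simp add: sem_None)
    qed
  qed
qed

definition heads :: "triple \<Rightarrow> nat" where "heads t = length (fst t)"
definition feet :: "triple \<Rightarrow> nat" where "feet t = length (snd (snd t))"

lemma expand_heads_feet: "heads (expand d t k) = heads t" "feet (expand d t k) = feet t"
  by (auto simp: heads_def feet_def expand_def split: prod.splits)

locale setting =
  fixes d :: nat and G :: "(nat list \<Rightarrow> nat list) set"
  assumes d0: "0 < d" and Gaut: "G \<subseteq> aut d" and Gss: "self_similar d G"
begin

lemma eqrel_inv:
  assumes "(a, b) \<in> eqrel d G" "valid d G a"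
  shows "valid d G b \<and> heads b = heads a \<and> feet b = feet a \<and> sem_eq d a b"
  using assms(1) unfolding eqrel_def
proof (induction rule: rtrancl_induct)
  case base
  then show ?case using assms(2) sem_eq_refl by blast
next
  case (step b c)
  from step(2) show ?case
  proof
    assume "(b, c) \<in> expRel d G"
    then obtain k where bc: "c = expand d b k" "valid d G b" "k < length (snd (fst (snd b)))"
      by (auto simp: expRel_def)
    show ?thesis using step(3) bc valid_expand[OF bc(2,3) d0 Gaut Gss] expand_heads_feet
      sem_eq_trans sem_eq_expand[OF bc(2) Gaut d0 bc(3) Gss] by metis
  next
    assume "(b, c) \<in> (expRel d G)\<inverse>"
    then obtain k where bc: "b = expand d c k" "valid d G c" "k < length (snd (fst (snd c)))"
      by (auto simp: expRel_def)
    show ?thesis using step(3) bc expand_heads_feet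
      sem_eq_trans sem_eq_sym sem_eq_expand[OF bc(2) Gaut d0 bc(3) Gss] by metis
  qed
qed

end

lemma eqrel_sym: "(a, b) \<in> eqrel d G \<Longrightarrow> (b, a) \<in> eqrel d G"
proof -
  assume "(a, b) \<in> eqrel d G"
  then have "(b, a) \<in> ((expRel d G \<union> (expRel d G)\<inverse>)\<inverse>)\<^sup>*"
    unfolding eqrel_def by (simp add: rtrancl_converse)
  moreover have "(expRel d G \<union> (expRel d G)\<inverse>)\<inverse> = expRel d G \<union> (expRel d G)\<inverse>" by auto
  ultimately show ?thesis unfolding eqrel_def by simp
qed

lemma eqrel_trans: "(a, b) \<in> eqrel d G \<Longrightarrow> (b, c) \<in> eqrel d G \<Longrightarrow> (a, c) \<in> eqrel d G"
  unfolding eqrel_def by (rule rtrancl_trans)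

lemma eqrel_refl: "(a, a) \<in> eqrel d G"
  unfolding eqrel_def by simp

lemma cls_eq: "(a, b) \<in> eqrel d G \<Longrightarrow> cls d G a = cls d G b"
  unfolding cls_def using eqrel_sym eqrel_trans by blast

lemma in_cls: "b \<in> cls d G a \<longleftrightarrow> (a, b) \<in> eqrel d G"
  by (simp add: cls_def)

lemma expand_eqrel: "valid d G t \<Longrightarrow> k < length (snd (fst (snd t))) \<Longrightarrow> (t, expand d t k) \<in> eqrel d G"
  unfolding eqrel_def expRel_def by (rule r_into_rtrancl) blast


lemma leaf_child:
  "x < length ts \<Longrightarrow> (\<exists>i. locL ts x u = Some (i, [])) \<longleftrightarrow> (\<exists>i. loc (ts ! x) u = Some (i, []))"
  using locL_nth[of x ts u] by (cases "loc (ts ! x) u") auto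

lemma tree_det:
  "full d t \<Longrightarrow> full d t' \<Longrightarrow> (\<forall>u. (\<exists>i. loc t u = Some (i, [])) \<longleftrightarrow> (\<exists>i. loc t' u = Some (i, []))) \<Longrightarrow> t = t'"
proof (induction t arbitrary: t')
  case Lf
  have "\<exists>i. loc t' [] = Some (i, [])" using Lf(3) by auto
  then show ?case by (cases t') auto
next
  case (Nd ts)
  show ?case
  proof (cases t')
    case Lf
    then show ?thesis using Nd(4) by (metis loc.simps(1,2) option.distinct(1))
  next
    case (Nd ts')
    have l: "length ts = d" "length ts' = d" using Nd.prems(1,2) \<open>t' = Nd ts'\<close> by auto
    have "ts = ts'"
    proof (rule nth_equalityI)
      show "length ts = length ts'" using l by simp
    next
      fix x assume x: "x < length ts"
      have "\<forall>u. (\<exists>i. loc (ts ! x) u = Some (i, [])) \<longleftrightarrow> (\<exists>i. loc (ts' ! x) u = Some (i, []))"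
      proof
        fix u
        have "(\<exists>i. loc (Nd ts) (x # u) = Some (i, [])) \<longleftrightarrow> (\<exists>i. loc (Nd ts') (x # u) = Some (i, []))"
          using Nd.prems(3) \<open>t' = Nd ts'\<close> by blast
        then show "(\<exists>i. loc (ts ! x) u = Some (i, [])) \<longleftrightarrow> (\<exists>i. loc (ts' ! x) u = Some (i, []))"
          using leaf_child[of x ts u] leaf_child[of x ts' u] x l by simp
      qed
      moreover have "full d (ts ! x)" "full d (ts' ! x)" using Nd.prems \<open>t' = Nd ts'\<close> x l by auto
      ultimately show "ts ! x = ts' ! x" using Nd.IH x by simp
    qed
    then show ?thesis using \<open>t' = Nd ts'\<close> by simp
  qed
qed

lemma forest_det:
  assumes "forest d F" "forest d F'" "length F = length F'"
    "\<forall>r u. (\<exists>i. locL F r u = Some (i, [])) \<longleftrightarrow> (\<exists>i. locL F' r u = Some (i, []))"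
  shows "F = F'"
proof (rule nth_equalityI)
  show "length F = length F'" by fact
next
  fix r assume r: "r < length F"
  show "F ! r = F' ! r"
  proof (rule tree_det)
    show "full d (F ! r)" "full d (F' ! r)" using assms r by (auto simp: forest_def)
    show "\<forall>u. (\<exists>i. loc (F ! r) u = Some (i, [])) \<longleftrightarrow> (\<exists>i. loc (F' ! r) u = Some (i, []))"
      using assms(4) leaf_child[of r F] leaf_child[of r F'] r assms(3) by simp
  qed
qed

lemma leafset: "(\<exists>i. locL F r u = Some (i, [])) \<longleftrightarrow> (r, u) \<in> plcL F ` {0..<fleaves F}"
proof
  assume "\<exists>i. locL F r u = Some (i, [])"
  then obtain i where "locL F r u = Some (i, [])" by blast
  then have "i < fleaves F \<and> (\<exists>u'. plcL F i = (r, u') \<and> u = u' @ [])" by (rule loc_Some(2))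
  then show "(r, u) \<in> plcL F ` {0..<fleaves F}" by force
next
  assume "(r, u) \<in> plcL F ` {0..<fleaves F}"
  then obtain i where "i < fleaves F" "plcL F i = (r, u)" by auto
  then show "\<exists>i. locL F r u = Some (i, [])" using locL_plcL_Some by blast
qed

lemma plcL_words: "forest d F \<Longrightarrow> i < fleaves F \<Longrightarrow> snd (plcL F i) \<in> words d"
  using plc_set(2)[of F d i] by (auto simp: forest_def words_iff)

lemma nth_sub: "set fs \<subseteq> S \<Longrightarrow> j < length fs \<Longrightarrow> fs ! j \<in> S"
  using nth_mem by blast

lemma (in setting) recovery:
  assumes v1: "valid d G (Fm, (\<sigma>, fs), Fp)" and v2: "valid d G (Fm', (\<sigma>', fs'), Fp)"
    and len: "length Fm = length Fm'"
    and eq: "\<forall>r w. w \<in> words d \<longrightarrow> N \<le> length w \<longrightarrow> sem (Fm, (\<sigma>, fs), Fp) r w = sem (Fm', (\<sigma>', fs'), Fp) r w"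
  shows "(Fm, (\<sigma>, fs), Fp) = (Fm', (\<sigma>', fs'), Fp)"
proof -
  have a: "forest d Fm" "forest d Fp" "fleaves Fm = length fs" "fleaves Fp = length fs"
     "\<sigma> permutes {0..<length fs}" "set fs \<subseteq> G" using v1 by (auto simp: valid_iff)
  have b: "forest d Fm'" "fleaves Fm' = length fs'" "fleaves Fp = length fs'"
     "\<sigma>' permutes {0..<length fs'}" "set fs' \<subseteq> G" using v2 by (auto simp: valid_iff)
  define n where "n = length fs"
  have ln: "length fs' = n" using a b n_def by simp
  have key: "\<And>j v. j < n \<Longrightarrow> v \<in> words d \<Longrightarrow> N \<le> length v \<Longrightarrow>
     plcL Fm (\<sigma> j) = plcL Fm' (\<sigma>' j) \<and> (fs ! j) v = (fs' ! j) v"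
  proof -
    fix j v assume jv: "j < n" "v \<in> words d" "N \<le> length v"
    obtain r u where ru: "plcL Fp j = (r, u)" by (cases "plcL Fp j")
    have uw: "u \<in> words d" using plcL_words[OF a(2), of j] ru jv a(4) n_def by simp
    have uvw: "u @ v \<in> words d" using uw jv by (simp add: words_iff)
    have lo: "locL Fp r (u @ v) = Some (j, v)" using loc_plc(2)[OF _ ru] jv a(4) n_def by simp
    have "sem (Fm, (\<sigma>, fs), Fp) r (u @ v) = sem (Fm', (\<sigma>', fs'), Fp) r (u @ v)"
      using eq uvw jv by simp
    then have e: "apsnd (\<lambda>u. u @ (fs ! j) v) (plcL Fm (\<sigma> j)) = apsnd (\<lambda>u. u @ (fs' ! j) v) (plcL Fm' (\<sigma>' j))"
      by (simp add: sem_def lo)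
    have f1: "fs ! j \<in> aut d" "fs' ! j \<in> aut d"
      using nth_sub[OF subset_trans[OF a(6) Gaut]] nth_sub[OF subset_trans[OF b(5) Gaut]] jv n_def ln by auto
    have l1: "length ((fs ! j) v) = length ((fs' ! j) v)" using aut_len[OF f1(1) jv(2)] aut_len[OF f1(2) jv(2)] by simp
    obtain r1 u1 where 1: "plcL Fm (\<sigma> j) = (r1, u1)" by (cases "plcL Fm (\<sigma> j)")
    obtain r2 u2 where 2: "plcL Fm' (\<sigma>' j) = (r2, u2)" by (cases "plcL Fm' (\<sigma>' j)")
    have "r1 = r2" "u1 @ (fs ! j) v = u2 @ (fs' ! j) v" using e 1 2 by auto
    then show "plcL Fm (\<sigma> j) = plcL Fm' (\<sigma>' j) \<and> (fs ! j) v = (fs' ! j) v" using 1 2 l1 by auto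
  qed
  define z where "z = replicate N (0::nat)"
  have z: "z \<in> words d" "N \<le> length z" using d0 by (auto simp: z_def words_iff)
  have pl: "\<And>j. j < n \<Longrightarrow> plcL Fm (\<sigma> j) = plcL Fm' (\<sigma>' j)" using key z by blast
  have fe: "fs = fs'"
  proof (rule nth_equalityI)
    show "length fs = length fs'" using ln n_def by simp
  next
    fix j assume j: "j < length fs"
    have f1: "fs ! j \<in> aut d" "fs' ! j \<in> aut d"
      using nth_sub[OF subset_trans[OF a(6) Gaut]] nth_sub[OF subset_trans[OF b(5) Gaut]] j n_def ln by auto
    show "fs ! j = fs' ! j"
    proof
      fix w
      show "(fs ! j) w = (fs' ! j) w"
      proof (cases "w \<in> words d")
        case True
        have "(fs ! j) (w @ z) = (fs' ! j) (w @ z)" using key[of j "w @ z"] j n_def True z by (simp add: words_iff)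
        then show ?thesis using aut_pref[OF f1(1) True z(1)] aut_pref[OF f1(2) True z(1)] by simp
      next
        case False then show ?thesis using aut_off f1 by metis
      qed
    qed
  qed
  have img: "plcL Fm ` {0..<n} = plcL Fm' ` {0..<n}"
  proof -
    have "plcL Fm ` {0..<n} = plcL Fm ` (\<sigma> ` {0..<n})" using permutes_image[OF a(5)] n_def by simp
    also have "\<dots> = (\<lambda>j. plcL Fm (\<sigma> j)) ` {0..<n}" by (simp add: image_image)
    also have "\<dots> = (\<lambda>j. plcL Fm' (\<sigma>' j)) ` {0..<n}" using pl by auto
    also have "\<dots> = plcL Fm' ` (\<sigma>' ` {0..<n})" by (simp add: image_image)
    also have "\<dots> = plcL Fm' ` {0..<n}" using permutes_image[OF b(4)] ln by simp
    finally show ?thesis .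
  qed
  have Fe: "Fm = Fm'"
  proof (rule forest_det[OF a(1) b(1) len], intro allI)
    fix r u
    show "(\<exists>i. locL Fm r u = Some (i, [])) \<longleftrightarrow> (\<exists>i. locL Fm' r u = Some (i, []))"
      unfolding leafset using img a(3) b(2) ln n_def by simp
  qed
  have se: "\<sigma> = \<sigma>'"
  proof
    fix j
    show "\<sigma> j = \<sigma>' j"
    proof (cases "j < n")
      case True
      have "\<sigma> j < n" "\<sigma>' j < n" using permutes_in_image[OF a(5)] permutes_in_image[OF b(4)] True n_def ln by auto
      moreover have "plcL Fm (\<sigma> j) = plcL Fm (\<sigma>' j)" using pl[OF True] Fe by simp
      ultimately show ?thesis using plcL_inj[of "\<sigma> j" Fm "\<sigma>' j"] a(3) n_def by simp
    next
      case False
      then show ?thesis using permutes_not_in[OF a(5)] permutes_not_in[OF b(4)] n_def ln by simp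
    qed
  qed
  show ?thesis using Fe se fe by simp
qed


definition astep :: "nat \<Rightarrow> (tree list \<times> tree list) set" where
  "astep d = {(F, attachF d k F) | F k. k < fleaves F}"

definition reach :: "nat \<Rightarrow> (tree list \<times> tree list) set" where
  "reach d = (astep d)\<^sup>*"

lemma attachF_app1: "k < fleaves F \<Longrightarrow> attachF d k (F @ G) = attachF d k F @ G"
  by (induction F arbitrary: k) auto

lemma attachF_app2: "attachF d (fleaves F + k) (F @ G) = F @ attachF d k G"
  by (induction F arbitrary: k) auto

lemma reach_app1: "(F, E) \<in> reach d \<Longrightarrow> (F @ G, E @ G) \<in> reach d"
  unfolding reach_def
proof (induction rule: rtrancl_induct)
  case base then show ?case by simp
next
  case (step E1 E2)
  then obtain k where "E2 = attachF d k E1" "k < fleaves E1" by (auto simp: astep_def)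
  then have "(E1 @ G, E2 @ G) \<in> astep d" unfolding astep_def
    by (auto simp: attachF_app1 intro!: exI[of _ "E1 @ G"] exI[of _ k])
  then show ?case using step(3) by simp
qed

lemma reach_app2: "(F, E) \<in> reach d \<Longrightarrow> (G @ F, G @ E) \<in> reach d"
  unfolding reach_def
proof (induction rule: rtrancl_induct)
  case base then show ?case by simp
next
  case (step E1 E2)
  then obtain k where "E2 = attachF d k E1" "k < fleaves E1" by (auto simp: astep_def)
  then have "(G @ E1, G @ E2) \<in> astep d" unfolding astep_def
    using attachF_app2[where F=G and G=E1 and k=k and d=d] by (auto intro!: exI[of _ "G @ E1"] exI[of _ "fleaves G + k"])
  then show ?case using step(3) by simp
qed

lemma reach_Nd: "(ts, ts') \<in> reach d \<Longrightarrow> ([Nd ts], [Nd ts']) \<in> reach d"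
  unfolding reach_def
proof (induction rule: rtrancl_induct)
  case base then show ?case by simp
next
  case (step E1 E2)
  then obtain k where "E2 = attachF d k E1" "k < fleaves E1" by (auto simp: astep_def)
  then have "([Nd E1], [Nd E2]) \<in> astep d" unfolding astep_def
    by (auto simp: nleaves_Nd intro!: exI[of _ "[Nd E1]"] exI[of _ k])
  then show ?case using step(3) by simp
qed

lemma reach_Lf: "([Lf], [Nd (replicate d Lf)]) \<in> reach d"
  unfolding reach_def astep_def by (rule r_into_rtrancl) (auto intro!: exI[of _ "[Lf]"] exI[of _ 0])

lemma reach_trans: "(a, b) \<in> reach d \<Longrightarrow> (b, c) \<in> reach d \<Longrightarrow> (a, c) \<in> reach d"
  unfolding reach_def by (rule rtrancl_trans)

lemma reach_refl: "(a, a) \<in> reach d"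
  unfolding reach_def by simp

lemma reach_pw:
  "length ts = length es \<Longrightarrow> (\<forall>i<length ts. ([ts ! i], [es ! i]) \<in> reach d) \<Longrightarrow> (ts, es) \<in> reach d"
proof (induction ts arbitrary: es)
  case Nil then show ?case by (simp add: reach_refl)
next
  case (Cons t ts)
  then obtain e es' where es: "es = e # es'" by (cases es) auto
  have 1: "([t], [e]) \<in> reach d" using Cons.prems es by force
  have 2: "(ts, es') \<in> reach d" using Cons es by force
  have "([t] @ ts, [e] @ ts) \<in> reach d" using reach_app1[OF 1] .
  moreover have "([e] @ ts, [e] @ es') \<in> reach d" using reach_app2[OF 2] .
  ultimately have "([t] @ ts, [e] @ es') \<in> reach d" by (rule reach_trans)
  then show ?case using es by simp
qed

lemma reach_from_Lf: "full d t \<Longrightarrow> ([Lf], [t]) \<in> reach d"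
proof (induction t)
  case Lf then show ?case by (simp add: reach_refl)
next
  case (Nd ts)
  have l: "length ts = d" using Nd.prems by simp
  have "(replicate d Lf, ts) \<in> reach d"
  proof (rule reach_pw)
    show "length (replicate d Lf) = length ts" using l by simp
    show "\<forall>i<length (replicate d Lf). ([replicate d Lf ! i], [ts ! i]) \<in> reach d"
    proof (intro allI impI)
      fix i assume i: "i < length (replicate d Lf)"
      then have "ts ! i \<in> set ts" "full d (ts ! i)" using l Nd.prems by auto
      then show "([replicate d Lf ! i], [ts ! i]) \<in> reach d" using Nd.IH i by simp
    qed
  qed
  then have "([Nd (replicate d Lf)], [Nd ts]) \<in> reach d" by (rule reach_Nd)
  then show ?case using reach_Lf reach_trans by metis
qed

lemma common_tree:
  "full d t \<Longrightarrow> full d t' \<Longrightarrow> \<exists>e. full d e \<and> ([t], [e]) \<in> reach d \<and> ([t'], [e]) \<in> reach d"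
proof (induction t arbitrary: t')
  case Lf then show ?case using reach_from_Lf[of d t'] reach_refl by blast
next
  case (Nd ts)
  show ?case
  proof (cases t')
    case Lf then show ?thesis using Nd.prems reach_from_Lf[of d "Nd ts"] reach_refl by blast
  next
    case (Nd ts')
    have l: "length ts = d" "length ts' = d" using Nd.prems \<open>t' = Nd ts'\<close> by auto
    have "\<forall>i. \<exists>e. i < d \<longrightarrow> full d e \<and> ([ts ! i], [e]) \<in> reach d \<and> ([ts' ! i], [e]) \<in> reach d"
    proof
      fix i
      show "\<exists>e. i < d \<longrightarrow> full d e \<and> ([ts ! i], [e]) \<in> reach d \<and> ([ts' ! i], [e]) \<in> reach d"
      proof (cases "i < d")
        case True
        have "ts ! i \<in> set ts" "full d (ts ! i)" "full d (ts' ! i)" using True l Nd.prems \<open>t' = Nd ts'\<close> by auto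
        then show ?thesis using Nd.IH by blast
      qed simp
    qed
    then obtain ef where ef: "\<forall>i. i < d \<longrightarrow> full d (ef i) \<and> ([ts ! i], [ef i]) \<in> reach d \<and> ([ts' ! i], [ef i]) \<in> reach d"
      by (rule choice[THEN exE]) blast
    define es where "es = map ef [0..<d]"
    have esn: "\<And>i. i < d \<Longrightarrow> es ! i = ef i" "length es = d" by (simp_all add: es_def)
    have "(ts, es) \<in> reach d"
    proof (rule reach_pw)
      show "length ts = length es" using l esn by simp
      show "\<forall>i<length ts. ([ts ! i], [es ! i]) \<in> reach d"
      proof (intro allI impI)
        fix i assume "i < length ts"
        then have "i < d" using l by simp
        then show "([ts ! i], [es ! i]) \<in> reach d" using ef esn(1)[of i] by simp
      qed
    qed
    moreover have "(ts', es) \<in> reach d"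
    proof (rule reach_pw)
      show "length ts' = length es" using l esn by simp
      show "\<forall>i<length ts'. ([ts' ! i], [es ! i]) \<in> reach d"
      proof (intro allI impI)
        fix i assume "i < length ts'"
        then have "i < d" using l by simp
        then show "([ts' ! i], [es ! i]) \<in> reach d" using ef esn(1)[of i] by simp
      qed
    qed
    moreover have "full d (Nd es)"
    proof -
      have "\<forall>e\<in>set es. full d e"
      proof
        fix e assume "e \<in> set es"
        then obtain i where "i < d" "e = ef i" by (auto simp: es_def)
        then show "full d e" using ef by simp
      qed
      then show ?thesis using esn by simp
    qed
    ultimately show ?thesis using reach_Nd[of ts es d] reach_Nd[of ts' es d] \<open>t' = Nd ts'\<close> by blast
  qed
qed

lemma common_forest:
  assumes "forest d F" "forest d F'" "length F = length F'"
  shows "\<exists>E. forest d E \<and> (F, E) \<in> reach d \<and> (F', E) \<in> reach d"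
proof -
  have "\<forall>i. \<exists>e. i < length F \<longrightarrow> full d e \<and> ([F ! i], [e]) \<in> reach d \<and> ([F' ! i], [e]) \<in> reach d"
  proof
    fix i
    show "\<exists>e. i < length F \<longrightarrow> full d e \<and> ([F ! i], [e]) \<in> reach d \<and> ([F' ! i], [e]) \<in> reach d"
    proof (cases "i < length F")
      case True
      have "full d (F ! i)" "full d (F' ! i)" using True assms by (auto simp: forest_def)
      then show ?thesis using common_tree by blast
    qed simp
  qed
  then obtain ef where ef: "\<forall>i. i < length F \<longrightarrow> full d (ef i) \<and> ([F ! i], [ef i]) \<in> reach d \<and> ([F' ! i], [ef i]) \<in> reach d"
    by (rule choice[THEN exE]) blast
  define E where "E = map ef [0..<length F]"
  have En: "\<And>i. i < length F \<Longrightarrow> E ! i = ef i" "length E = length F" by (simp_all add: E_def)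
  have "(F, E) \<in> reach d"
  proof (rule reach_pw)
    show "length F = length E" using En by simp
    show "\<forall>i<length F. ([F ! i], [E ! i]) \<in> reach d"
    proof (intro allI impI)
      fix i assume "i < length F"
      then show "([F ! i], [E ! i]) \<in> reach d" using ef En(1)[of i] by simp
    qed
  qed
  moreover have "(F', E) \<in> reach d"
  proof (rule reach_pw)
    show "length F' = length E" using En assms(3) by simp
    show "\<forall>i<length F'. ([F' ! i], [E ! i]) \<in> reach d"
    proof (intro allI impI)
      fix i assume "i < length F'"
      then have "i < length F" using assms(3) by simp
      then show "([F' ! i], [E ! i]) \<in> reach d" using ef En(1)[of i] by simp
    qed
  qed
  moreover have "forest d E"
    unfolding forest_def
  proof
    fix e assume "e \<in> set E"
    then obtain i where "i < length F" "e = ef i" by (auto simp: E_def)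
    then show "full d e" using ef by simp
  qed
  ultimately show ?thesis by blast
qed

context setting
begin

lemma feet_to:
  assumes "(snd (snd t), E) \<in> reach d" "valid d G t"
  shows "\<exists>t1. (t, t1) \<in> eqrel d G \<and> snd (snd t1) = E"
  using assms(1) unfolding reach_def
proof (induction rule: rtrancl_induct)
  case base then show ?case using eqrel_refl by blast
next
  case (step E1 E2)
  then obtain t1 where t1: "(t, t1) \<in> eqrel d G" "snd (snd t1) = E1" by blast
  obtain k where k: "E2 = attachF d k E1" "k < fleaves E1" using step(2) by (auto simp: astep_def)
  have v1: "valid d G t1" using eqrel_inv[OF t1(1) assms(2)] by blast
  obtain Fm \<sigma> fs where tt: "t1 = (Fm, (\<sigma>, fs), E1)" using t1(2) by (cases t1) auto
  have kn: "k < length fs" using v1 k tt by (simp add: valid_iff)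
  have "(t1, expand d t1 k) \<in> eqrel d G" using expand_eqrel[OF v1] kn tt by simp
  moreover have "snd (snd (expand d t1 k)) = E2" using tt k by (simp add: expand_def)
  ultimately show ?case using t1(1) eqrel_trans by blast
qed

lemma heads_to:
  assumes "(fst t, E) \<in> reach d" "valid d G t"
  shows "\<exists>t1. (t, t1) \<in> eqrel d G \<and> fst t1 = E"
  using assms(1) unfolding reach_def
proof (induction rule: rtrancl_induct)
  case base then show ?case using eqrel_refl by blast
next
  case (step E1 E2)
  then obtain t1 where t1: "(t, t1) \<in> eqrel d G" "fst t1 = E1" by blast
  obtain k where k: "E2 = attachF d k E1" "k < fleaves E1" using step(2) by (auto simp: astep_def)
  have v1: "valid d G t1" using eqrel_inv[OF t1(1) assms(2)] by blast
  obtain \<sigma> fs Fp where tt: "t1 = (E1, (\<sigma>, fs), Fp)" using t1(2) by (cases t1) auto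
  have kn: "k < length fs" "\<sigma> permutes {0..<length fs}" using v1 k tt by (auto simp: valid_iff)
  have "k \<in> \<sigma> ` {0..<length fs}" using permutes_image[OF kn(2)] kn(1) by simp
  then obtain j where j: "j < length fs" "\<sigma> j = k" by auto
  have "(t1, expand d t1 j) \<in> eqrel d G" using expand_eqrel[OF v1] j tt by simp
  moreover have "fst (expand d t1 j) = E2" using tt k j by (simp add: expand_def)
  ultimately show ?case using t1(1) eqrel_trans by blast
qed

end


definition tprod :: "triple \<Rightarrow> triple \<Rightarrow> triple" where
  "tprod a b = (fst a, wmult (fst (snd a)) (fst (snd b)), snd (snd b))"

definition tinv :: "nat \<Rightarrow> triple \<Rightarrow> triple" where
  "tinv d a = (snd (snd a), winv d (fst (snd a)), fst a)"

definition comp_sem :: "triple \<Rightarrow> triple \<Rightarrow> nat \<Rightarrow> nat list \<Rightarrow> (nat \<times> nat list) option" where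
  "comp_sem a b r w = Option.bind (sem b r w) (\<lambda>(r', w'). sem a r' w')"

lemma sem_out:
  assumes "valid d G t" "G \<subseteq> aut d" "w \<in> words d" "sem t r w = Some (r', w')"
  shows "w' \<in> words d \<and> length w \<le> length w' + hgtL (snd (snd t))"
proof -
  obtain Fm \<sigma> fs Fp where t: "t = (Fm, (\<sigma>, fs), Fp)" by (cases t) auto
  have v: "forest d Fm" "forest d Fp" "fleaves Fm = length fs" "fleaves Fp = length fs"
     "\<sigma> permutes {0..<length fs}" "set fs \<subseteq> G" using assms(1) by (auto simp: t valid_iff)
  obtain j v' where jv: "locL Fp r w = Some (j, v')" using assms(4) by (cases "locL Fp r w") (auto simp: t sem_def)
  have jn: "j < length fs" using loc_Some(2)[OF jv] v(4) by simp
  have sj: "\<sigma> j < length fs" using permutes_in_image[OF v(5)] jn by simp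
  have out: "Some (r', w') = Some (apsnd (\<lambda>u. u @ (fs ! j) v') (plcL Fm (\<sigma> j)))"
    using assms(4) by (simp add: t sem_def jv)
  have fj: "fs ! j \<in> aut d" using nth_sub[OF subset_trans[OF v(6) assms(2)] jn] .
  have v'w: "v' \<in> words d" using locL_suffix[OF jv] assms(3) by (auto simp: words_iff)
  have u: "snd (plcL Fm (\<sigma> j)) \<in> words d" using plcL_words[OF v(1)] sj v(3) by simp
  have w': "w' = snd (plcL Fm (\<sigma> j)) @ (fs ! j) v'" using out by (cases "plcL Fm (\<sigma> j)") auto
  have "w' \<in> words d" using w' u aut_words[OF fj v'w] by (simp add: words_iff)
  moreover have "length w \<le> hgtL Fp + length v'" using locL_len[OF jv] .
  moreover have "length ((fs ! j) v') = length v'" using aut_len[OF fj v'w] .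
  ultimately show ?thesis using w' t by simp
qed

locale gset = setting +
  assumes Gsub: "subgrp d G"
begin

lemma Gcomp: "f \<in> G \<Longrightarrow> g \<in> G \<Longrightarrow> f \<circ> g \<in> G"
  using Gsub by (auto simp: subgrp_def)

lemma Ginv: "f \<in> G \<Longrightarrow> ainv d f \<in> G"
  using Gsub by (auto simp: subgrp_def)

lemma Gid: "id \<in> G"
  using Gsub by (auto simp: subgrp_def)

lemma wmult_wr:
  assumes "(\<sigma>, fs) \<in> wr n G" "(\<tau>, gs) \<in> wr n G"
  shows "wmult (\<sigma>, fs) (\<tau>, gs) \<in> wr n G"
proof -
  have a: "\<sigma> permutes {0..<n}" "length fs = n" "set fs \<subseteq> G" "\<tau> permutes {0..<n}" "length gs = n" "set gs \<subseteq> G"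
    using assms by (auto simp: wr_def)
  have "\<And>i. i < n \<Longrightarrow> fs ! (\<tau> i) \<circ> gs ! i \<in> G"
  proof -
    fix i assume i: "i < n"
    have "\<tau> i < n" using permutes_in_image[OF a(4)] i by simp
    then show "fs ! (\<tau> i) \<circ> gs ! i \<in> G" using Gcomp nth_sub[OF a(3)] nth_sub[OF a(6)] a i by simp
  qed
  then show ?thesis using a by (auto simp: wmult_def wr_def intro: permutes_compose)
qed

lemma valid_tprod:
  assumes "valid d G (F, f, E)" "valid d G (E, g, D)"
  shows "valid d G (tprod (F, f, E) (E, g, D))"
proof -
  obtain \<sigma> fs where f: "f = (\<sigma>, fs)" by (cases f)
  obtain \<tau> gs where g: "g = (\<tau>, gs)" by (cases g)
  have l: "length fs = length gs" using assms f g by (simp add: valid_iff)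
  have "wmult f g \<in> wr (length gs) G" using wmult_wr[of \<sigma> fs "length gs" \<tau> gs] assms f g l
    by (simp add: valid_iff wr_def)
  moreover have "length (snd (wmult f g)) = length gs" by (simp add: f g wmult_def)
  ultimately show ?thesis using assms f g l by (auto simp: valid_def tprod_def)
qed

lemma sem_tprod:
  assumes "valid d G (F, f, E)" "valid d G (E, g, D)" "w \<in> words d"
  shows "sem (tprod (F, f, E) (E, g, D)) r w = comp_sem (F, f, E) (E, g, D) r w"
proof -
  obtain \<sigma> fs where f: "f = (\<sigma>, fs)" by (cases f)
  obtain \<tau> gs where g: "g = (\<tau>, gs)" by (cases g)
  have va: "forest d F" "forest d E" "fleaves F = length fs" "fleaves E = length fs"
     "\<sigma> permutes {0..<length fs}" "set fs \<subseteq> G" using assms(1) f by (auto simp: valid_iff)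
  have vb: "forest d D" "fleaves D = length gs" "fleaves E = length gs"
     "\<tau> permutes {0..<length gs}" "set gs \<subseteq> G" using assms(2) g by (auto simp: valid_iff)
  show ?thesis
  proof (cases "locL D r w")
    case None
    then show ?thesis by (simp add: tprod_def comp_sem_def sem_def f g wmult_def)
  next
    case (Some jv)
    then obtain j v where jv: "locL D r w = Some (j, v)" by (cases jv) auto
    have jn: "j < length gs" using loc_Some(2)[OF jv] vb(2) by simp
    have tj: "\<tau> j < length gs" using permutes_in_image[OF vb(4)] jn by simp
    obtain r1 u1 where ru: "plcL E (\<tau> j) = (r1, u1)" by (cases "plcL E (\<tau> j)")
    have lo: "locL E r1 (u1 @ (gs ! j) v) = Some (\<tau> j, (gs ! j) v)"
      using loc_plc(2)[OF _ ru] tj vb(3) by simp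
    show ?thesis using jv ru lo jn
      by (simp add: tprod_def comp_sem_def sem_def f g wmult_def)
  qed
qed

lemma comp_sem_cong:
  assumes "sem_eq d a a1" "sem_eq d b b1" "valid d G b1"
  shows "\<exists>N. \<forall>r w. w \<in> words d \<longrightarrow> N \<le> length w \<longrightarrow> comp_sem a b r w = comp_sem a1 b1 r w"
proof -
  obtain Na where Na: "\<forall>r w. w \<in> words d \<longrightarrow> Na \<le> length w \<longrightarrow> sem a r w = sem a1 r w"
    using assms(1) by (auto simp: sem_eq_def)
  obtain Nb where Nb: "\<forall>r w. w \<in> words d \<longrightarrow> Nb \<le> length w \<longrightarrow> sem b r w = sem b1 r w"
    using assms(2) by (auto simp: sem_eq_def)
  define H where "H = hgtL (snd (snd b1))"
  show ?thesis
  proof (intro exI allI impI)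
    fix r w assume w: "w \<in> words d" "max Nb (Na + H) \<le> length w"
    have 1: "sem b r w = sem b1 r w" using Nb w by simp
    show "comp_sem a b r w = comp_sem a1 b1 r w"
    proof (cases "sem b1 r w")
      case None then show ?thesis using 1 by (simp add: comp_sem_def)
    next
      case (Some p)
      obtain r' w' where p: "p = (r', w')" by (cases p)
      have "w' \<in> words d \<and> length w \<le> length w' + H"
        using sem_out[OF assms(3) Gaut w(1)] Some p H_def by simp
      then have "sem a r' w' = sem a1 r' w'" using Na w by simp
      then show ?thesis using 1 Some p by (simp add: comp_sem_def)
    qed
  qed
qed

lemma cls_eqI:
  assumes va: "valid d G a" and vb: "valid d G b" and h: "heads a = heads b" and f: "feet a = feet b"
    and s: "sem_eq d a b"
  shows "(a, b) \<in> eqrel d G"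
proof -
  have fa: "forest d (snd (snd a))" "forest d (snd (snd b))"
    using va vb by (cases a, cases b, auto simp: valid_def)+
  obtain E where E: "forest d E" "(snd (snd a), E) \<in> reach d" "(snd (snd b), E) \<in> reach d"
    using common_forest[OF fa] f by (auto simp: feet_def)
  obtain a1 where a1: "(a, a1) \<in> eqrel d G" "snd (snd a1) = E" using feet_to[OF E(2) va] by blast
  obtain b1 where b1: "(b, b1) \<in> eqrel d G" "snd (snd b1) = E" using feet_to[OF E(3) vb] by blast
  have ia: "valid d G a1 \<and> heads a1 = heads a \<and> feet a1 = feet a \<and> sem_eq d a a1" using eqrel_inv[OF a1(1) va] .
  have ib: "valid d G b1 \<and> heads b1 = heads b \<and> feet b1 = feet b \<and> sem_eq d b b1" using eqrel_inv[OF b1(1) vb] .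
  have s1: "sem_eq d a1 b1" using ia ib s sem_eq_trans sem_eq_sym by metis
  obtain Fm \<sigma> fs where a1e: "a1 = (Fm, (\<sigma>, fs), E)" using a1(2) by (cases a1) auto
  obtain Fm' \<sigma>' fs' where b1e: "b1 = (Fm', (\<sigma>', fs'), E)" using b1(2) by (cases b1) auto
  obtain N where N: "\<forall>r w. w \<in> words d \<longrightarrow> N \<le> length w \<longrightarrow> sem a1 r w = sem b1 r w"
    using s1 by (auto simp: sem_eq_def)
  have "length Fm = length Fm'" using ia ib h a1e b1e by (simp add: heads_def)
  then have "a1 = b1" using recovery[of Fm \<sigma> fs E Fm' \<sigma>' fs' N] ia ib N a1e b1e by simp
  then show ?thesis using a1(1) b1(1) eqrel_sym eqrel_trans by metis
qed

lemma cls_valid: "valid d G a \<Longrightarrow> t \<in> cls d G a \<Longrightarrow> valid d G t"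
  using eqrel_inv in_cls by blast

lemma gmult_match:
  assumes va: "valid d G (F, f, E)" and vb: "valid d G (E, g, D)"
  shows "gmult d G (cls d G (F, f, E)) (cls d G (E, g, D)) = cls d G (tprod (F, f, E) (E, g, D))"
proof
  show "cls d G (tprod (F, f, E) (E, g, D)) \<subseteq> gmult d G (cls d G (F, f, E)) (cls d G (E, g, D))"
    unfolding gmult_def tprod_def using eqrel_refl by (fastforce simp: in_cls)
next
  show "gmult d G (cls d G (F, f, E)) (cls d G (E, g, D)) \<subseteq> cls d G (tprod (F, f, E) (E, g, D))"
  proof
    fix t assume "t \<in> gmult d G (cls d G (F, f, E)) (cls d G (E, g, D))"
    then obtain F1 f1 E1 g1 D1 where w: "(F1, f1, E1) \<in> cls d G (F, f, E)" "(E1, g1, D1) \<in> cls d G (E, g, D)"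
      "((F1, wmult f1 g1, D1), t) \<in> eqrel d G" unfolding gmult_def by blast
    have e1: "((F, f, E), (F1, f1, E1)) \<in> eqrel d G" "((E, g, D), (E1, g1, D1)) \<in> eqrel d G" using w in_cls by auto
    have i1: "valid d G (F1, f1, E1) \<and> heads (F1, f1, E1) = heads (F, f, E) \<and> feet (F1, f1, E1) = feet (F, f, E)
       \<and> sem_eq d (F, f, E) (F1, f1, E1)" using eqrel_inv[OF e1(1) va] .
    have i2: "valid d G (E1, g1, D1) \<and> heads (E1, g1, D1) = heads (E, g, D) \<and> feet (E1, g1, D1) = feet (E, g, D)
       \<and> sem_eq d (E, g, D) (E1, g1, D1)" using eqrel_inv[OF e1(2) vb] .
    have vp: "valid d G (tprod (F, f, E) (E, g, D))" using valid_tprod[OF va vb] .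
    have vq: "valid d G (tprod (F1, f1, E1) (E1, g1, D1))" using valid_tprod i1 i2 by blast
    obtain N where N: "\<forall>r w. w \<in> words d \<longrightarrow> N \<le> length w \<longrightarrow>
       comp_sem (F, f, E) (E, g, D) r w = comp_sem (F1, f1, E1) (E1, g1, D1) r w"
      using comp_sem_cong[of "(F, f, E)" "(F1, f1, E1)" "(E, g, D)" "(E1, g1, D1)"] i1 i2 by blast
    have "sem_eq d (tprod (F, f, E) (E, g, D)) (tprod (F1, f1, E1) (E1, g1, D1))"
      unfolding sem_eq_def using N sem_tprod[OF va vb] sem_tprod[of F1 f1 E1 g1 D1] i1 i2 by metis
    moreover have "heads (tprod (F, f, E) (E, g, D)) = heads (tprod (F1, f1, E1) (E1, g1, D1))"
      "feet (tprod (F, f, E) (E, g, D)) = feet (tprod (F1, f1, E1) (E1, g1, D1))"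
      using i1 i2 by (auto simp: heads_def feet_def tprod_def)
    ultimately have "(tprod (F, f, E) (E, g, D), tprod (F1, f1, E1) (E1, g1, D1)) \<in> eqrel d G"
      using cls_eqI[OF vp vq] by blast
    then have "(tprod (F, f, E) (E, g, D), t) \<in> eqrel d G" using w(3) eqrel_trans by (simp add: tprod_def)
    then show "t \<in> cls d G (tprod (F, f, E) (E, g, D))" by (simp add: in_cls)
  qed
qed

end


type_synonym psem = "nat \<Rightarrow> nat list \<Rightarrow> (nat \<times> nat list) option"

definition ev_eq :: "nat \<Rightarrow> psem \<Rightarrow> psem \<Rightarrow> bool" where
  "ev_eq d f g \<longleftrightarrow> (\<exists>N. \<forall>r w. w \<in> words d \<longrightarrow> N \<le> length w \<longrightarrow> f r w = g r w)"

definition ocomp :: "psem \<Rightarrow> psem \<Rightarrow> psem" where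
  "ocomp f g r w = Option.bind (g r w) (\<lambda>(r', w'). f r' w')"

definition good :: "nat \<Rightarrow> psem \<Rightarrow> bool" where
  "good d g \<longleftrightarrow> (\<exists>H. \<forall>r w r' w'. w \<in> words d \<longrightarrow> g r w = Some (r', w') \<longrightarrow> w' \<in> words d \<and> length w \<le> length w' + H)"

lemma ev_eq_refl: "ev_eq d f f" by (auto simp: ev_eq_def)
lemma ev_eq_sym: "ev_eq d f g \<Longrightarrow> ev_eq d g f" by (auto simp: ev_eq_def) metis
lemma ev_eq_trans: "ev_eq d f g \<Longrightarrow> ev_eq d g h \<Longrightarrow> ev_eq d f h"
  unfolding ev_eq_def by (metis max.bounded_iff)

lemma sem_eq_ev: "sem_eq d a b \<longleftrightarrow> ev_eq d (sem a) (sem b)"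
  by (simp add: sem_eq_def ev_eq_def)

lemma comp_sem_ocomp: "comp_sem a b = ocomp (sem a) (sem b)"
  by (auto simp: comp_sem_def ocomp_def fun_eq_iff)

lemma ocomp_assoc: "ocomp (ocomp f g) h = ocomp f (ocomp g h)"
proof (intro ext)
  fix r w
  show "ocomp (ocomp f g) h r w = ocomp f (ocomp g h) r w"
    by (cases "h r w") (auto simp: ocomp_def split: prod.splits)
qed

lemma good_ocomp: "good d f \<Longrightarrow> good d g \<Longrightarrow> good d (ocomp f g)"
  unfolding good_def ocomp_def
proof -
  assume "\<exists>H. \<forall>r w r' w'. w \<in> words d \<longrightarrow> f r w = Some (r', w') \<longrightarrow> w' \<in> words d \<and> length w \<le> length w' + H"
    "\<exists>H. \<forall>r w r' w'. w \<in> words d \<longrightarrow> g r w = Some (r', w') \<longrightarrow> w' \<in> words d \<and> length w \<le> length w' + H"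
  then obtain H1 H2 where
    H1: "\<forall>r w r' w'. w \<in> words d \<longrightarrow> f r w = Some (r', w') \<longrightarrow> w' \<in> words d \<and> length w \<le> length w' + H1" and
    H2: "\<forall>r w r' w'. w \<in> words d \<longrightarrow> g r w = Some (r', w') \<longrightarrow> w' \<in> words d \<and> length w \<le> length w' + H2"
    by blast
  show "\<exists>H. \<forall>r w r' w'. w \<in> words d \<longrightarrow> Option.bind (g r w) (\<lambda>(r', w'). f r' w') = Some (r', w') \<longrightarrow> w' \<in> words d \<and> length w \<le> length w' + H"
  proof (intro exI allI impI)
    fix r w r' w' assume a: "w \<in> words d" "Option.bind (g r w) (\<lambda>(r', w'). f r' w') = Some (r', w')"
    then obtain r1 w1 where 1: "g r w = Some (r1, w1)" "f r1 w1 = Some (r', w')"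
      by (cases "g r w") auto
    have 2: "w1 \<in> words d \<and> length w \<le> length w1 + H2" using H2 a(1) 1(1) by blast
    have 3: "w' \<in> words d \<and> length w1 \<le> length w' + H1" using H1 2 1(2) by blast
    show "w' \<in> words d \<and> length w \<le> length w' + (H1 + H2)" using 2 3 by linarith
  qed
qed

lemma ocomp_cong:
  assumes "ev_eq d f f1" "ev_eq d g g1" "good d g1"
  shows "ev_eq d (ocomp f g) (ocomp f1 g1)"
proof -
  obtain Na where Na: "\<forall>r w. w \<in> words d \<longrightarrow> Na \<le> length w \<longrightarrow> f r w = f1 r w"
    using assms(1) by (auto simp: ev_eq_def)
  obtain Nb where Nb: "\<forall>r w. w \<in> words d \<longrightarrow> Nb \<le> length w \<longrightarrow> g r w = g1 r w"
    using assms(2) by (auto simp: ev_eq_def)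
  obtain H where H: "\<forall>r w r' w'. w \<in> words d \<longrightarrow> g1 r w = Some (r', w') \<longrightarrow> w' \<in> words d \<and> length w \<le> length w' + H"
    using assms(3) by (auto simp: good_def)
  show ?thesis unfolding ev_eq_def
  proof (intro exI allI impI)
    fix r w assume w: "w \<in> words d" "max Nb (Na + H) \<le> length w"
    have 1: "g r w = g1 r w" using Nb w by simp
    show "ocomp f g r w = ocomp f1 g1 r w"
    proof (cases "g1 r w")
      case None then show ?thesis using 1 by (simp add: ocomp_def)
    next
      case (Some p)
      obtain r' w' where p: "p = (r', w')" by (cases p)
      have "w' \<in> words d \<and> length w \<le> length w' + H" using H w(1) Some p by blast
      then have "f r' w' = f1 r' w'" using Na w by simp
      then show ?thesis using 1 Some p by (simp add: ocomp_def)
    qed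
  qed
qed

context gset
begin

lemma good_sem: "valid d G t \<Longrightarrow> good d (sem t)"
  unfolding good_def using sem_out[OF _ Gaut] by blast

lemma cls_eq_sem:
  assumes "valid d G a" "valid d G b" "heads a = heads b" "feet a = feet b" "ev_eq d (sem a) (sem b)"
  shows "cls d G a = cls d G b"
  using cls_eqI[OF assms(1-4)] assms(5) cls_eq sem_eq_ev by blast

lemma gmult_cls:
  assumes va: "valid d G a" and vb: "valid d G b" and fh: "feet a = heads b"
  shows "\<exists>p. valid d G p \<and> gmult d G (cls d G a) (cls d G b) = cls d G p \<and> heads p = heads a \<and> feet p = feet b
     \<and> ev_eq d (sem p) (ocomp (sem a) (sem b))"
proof -
  have fa: "forest d (snd (snd a))" "forest d (fst b)"
    using va vb by (cases a, cases b, auto simp: valid_def)+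
  obtain E where E: "forest d E" "(snd (snd a), E) \<in> reach d" "(fst b, E) \<in> reach d"
    using common_forest[OF fa] fh by (auto simp: feet_def heads_def)
  obtain a1 where a1: "(a, a1) \<in> eqrel d G" "snd (snd a1) = E" using feet_to[OF E(2) va] by blast
  obtain b1 where b1: "(b, b1) \<in> eqrel d G" "fst b1 = E" using heads_to[OF E(3) vb] by blast
  have ia: "valid d G a1 \<and> heads a1 = heads a \<and> feet a1 = feet a \<and> sem_eq d a a1" using eqrel_inv[OF a1(1) va] .
  have ib: "valid d G b1 \<and> heads b1 = heads b \<and> feet b1 = feet b \<and> sem_eq d b b1" using eqrel_inv[OF b1(1) vb] .
  obtain F f where a1e: "a1 = (F, f, E)" using a1(2) by (cases a1) auto
  obtain g D where b1e: "b1 = (E, g, D)" using b1(2) by (cases b1) auto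
  define p where "p = tprod a1 b1"
  have vp: "valid d G p" using valid_tprod ia ib a1e b1e p_def by simp
  have "gmult d G (cls d G a) (cls d G b) = gmult d G (cls d G a1) (cls d G b1)"
    using cls_eq a1(1) b1(1) by simp
  also have "\<dots> = cls d G p" using gmult_match ia ib a1e b1e p_def by simp
  finally have g: "gmult d G (cls d G a) (cls d G b) = cls d G p" .
  have "\<forall>r w. w \<in> words d \<longrightarrow> sem p r w = ocomp (sem a1) (sem b1) r w"
    using sem_tprod[of F f E g D] ia ib a1e b1e p_def by (simp add: comp_sem_ocomp)
  then have "ev_eq d (sem p) (ocomp (sem a1) (sem b1))" unfolding ev_eq_def by blast
  moreover have "ev_eq d (ocomp (sem a1) (sem b1)) (ocomp (sem a) (sem b))"
  proof (rule ocomp_cong)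
    show "ev_eq d (sem a1) (sem a)" using ia sem_eq_ev ev_eq_sym by blast
    show "ev_eq d (sem b1) (sem b)" using ib sem_eq_ev ev_eq_sym by blast
    show "good d (sem b)" using good_sem vb by blast
  qed
  ultimately have "ev_eq d (sem p) (ocomp (sem a) (sem b))" by (rule ev_eq_trans)
  moreover have "heads p = heads a" "feet p = feet b" using ia ib a1e b1e p_def
    by (auto simp: heads_def feet_def tprod_def)
  ultimately show ?thesis using vp g by blast
qed

end


lemma ainv_props:
  assumes "f \<in> aut d" "w \<in> words d"
  shows "ainv d f w \<in> words d" "f (ainv d f w) = w"
proof -
  have b: "bij_betw f (words d) (words d)" using assms(1) by (simp add: aut_def)
  show "ainv d f w \<in> words d" using assms(2) bij_betw_inv_into[OF b] bij_betwE by (fastforce simp: ainv_def)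
  show "f (ainv d f w) = w" using assms(2) bij_betw_inv_into_right[OF b] by (simp add: ainv_def)
qed

lemma ainv_left:
  assumes "f \<in> aut d" "w \<in> words d"
  shows "ainv d f (f w) = w"
proof -
  have b: "bij_betw f (words d) (words d)" using assms(1) by (simp add: aut_def)
  have "f w \<in> words d" using aut_words[OF assms] .
  then show ?thesis using assms(2) bij_betw_inv_into_left[OF b] by (simp add: ainv_def)
qed

definition idt :: "nat \<Rightarrow> triple" where
  "idt n = (triv n, (id, replicate n id), triv n)"

lemma plcL_rep: "r < n \<Longrightarrow> plcL (replicate n Lf) r = (r, [])"
  by (induction n arbitrary: r) (auto simp: less_Suc_eq_0_disj)

lemma sem_idt: "sem (idt n) r w = (if r < n then Some (r, w) else None)"
  by (simp add: sem_def idt_def triv_def locL_rep plcL_rep)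

context gset
begin

lemma valid_idt: "valid d G (idt n)"
  using Gid by (auto simp: valid_def idt_def triv_def forest_def wr_def nleaves_rep permutes_id)

lemma winv_wr:
  assumes "(\<sigma>, fs) \<in> wr n G"
  shows "winv d (\<sigma>, fs) \<in> wr n G"
proof -
  have a: "\<sigma> permutes {0..<n}" "length fs = n" "set fs \<subseteq> G" using assms by (auto simp: wr_def)
  have p: "inv \<sigma> permutes {0..<n}" using permutes_inv[OF a(1)] .
  have "\<And>i. i < n \<Longrightarrow> ainv d (fs ! (inv \<sigma> i)) \<in> G"
  proof -
    fix i assume "i < n"
    then have "inv \<sigma> i < n" using permutes_in_image[OF p] by simp
    then show "ainv d (fs ! (inv \<sigma> i)) \<in> G" using Ginv nth_sub[OF a(3)] a(2) by simp
  qed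
  then show ?thesis using a p by (auto simp: winv_def wr_def)
qed

lemma valid_tinv: "valid d G t \<Longrightarrow> valid d G (tinv d t)"
proof -
  assume v: "valid d G t"
  obtain Fm \<sigma> fs Fp where t: "t = (Fm, (\<sigma>, fs), Fp)" by (cases t) auto
  have "(\<sigma>, fs) \<in> wr (length fs) G" using v t by (simp add: valid_def)
  then have w: "winv d (\<sigma>, fs) \<in> wr (length fs) G" by (rule winv_wr)
  have l: "length (snd (winv d (\<sigma>, fs))) = length fs" by (simp add: winv_def)
  show ?thesis using v w l t by (simp add: valid_def tinv_def)
qed

lemma sem_tinv:
  assumes v: "valid d G t" and w: "w \<in> words d" and s: "sem (tinv d t) r w = Some (r', w')"
  shows "sem t r' w' = Some (r, w)"
proof -
  obtain Fm \<sigma> fs Fp where t: "t = (Fm, (\<sigma>, fs), Fp)" by (cases t) auto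
  have a: "forest d Fm" "forest d Fp" "fleaves Fm = length fs" "fleaves Fp = length fs"
     "\<sigma> permutes {0..<length fs}" "set fs \<subseteq> G" using v by (auto simp: t valid_iff)
  obtain i v' where iv: "locL Fm r w = Some (i, v')" using s
    by (cases "locL Fm r w") (auto simp: sem_def tinv_def t winv_def)
  obtain u where iu: "i < length fs" "plcL Fm i = (r, u)" "w = u @ v'" using loc_Some(2)[OF iv] a(3) by auto
  define j where "j = inv \<sigma> i"
  have j: "j < length fs" "\<sigma> j = i" using permutes_in_image[OF permutes_inv[OF a(5)]] iu
    permutes_inverses(1)[OF a(5)] by (auto simp: j_def)
  have fj: "fs ! j \<in> aut d" using nth_sub[OF subset_trans[OF a(6) Gaut] j(1)] .
  have v'w: "v' \<in> words d" using locL_suffix[OF iv] w by (auto simp: words_iff)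
  obtain r1 u1 where ru: "plcL Fp j = (r1, u1)" by (cases "plcL Fp j")
  have out: "(r', w') = (r1, u1 @ ainv d (fs ! j) v')"
    using s iu(1) iv ru unfolding j_def by (simp add: sem_def tinv_def t winv_def)
  have lo: "locL Fp r1 (u1 @ ainv d (fs ! j) v') = Some (j, ainv d (fs ! j) v')"
    using loc_plc(2)[OF _ ru] j a(4) by simp
  show ?thesis using out lo j iu ainv_props(2)[OF fj v'w] by (simp add: sem_def t)
qed

lemma sem_inj:
  assumes v: "valid d G t" and w: "w1 \<in> words d" "w2 \<in> words d"
    and s: "sem t r1 w1 = Some p" "sem t r2 w2 = Some p"
  shows "r1 = r2 \<and> w1 = w2"
proof -
  obtain Fm \<sigma> fs Fp where t: "t = (Fm, (\<sigma>, fs), Fp)" by (cases t) auto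
  have a: "forest d Fm" "forest d Fp" "fleaves Fm = length fs" "fleaves Fp = length fs"
     "\<sigma> permutes {0..<length fs}" "set fs \<subseteq> G" using v by (auto simp: t valid_iff)
  obtain j1 v1 where 1: "locL Fp r1 w1 = Some (j1, v1)" using s(1) by (cases "locL Fp r1 w1") (auto simp: sem_def t)
  obtain j2 v2 where 2: "locL Fp r2 w2 = Some (j2, v2)" using s(2) by (cases "locL Fp r2 w2") (auto simp: sem_def t)
  obtain u1 where u1: "j1 < length fs" "plcL Fp j1 = (r1, u1)" "w1 = u1 @ v1" using loc_Some(2)[OF 1] a(4) by auto
  obtain u2 where u2: "j2 < length fs" "plcL Fp j2 = (r2, u2)" "w2 = u2 @ v2" using loc_Some(2)[OF 2] a(4) by auto
  have sj: "\<sigma> j1 < length fs" "\<sigma> j2 < length fs" using permutes_in_image[OF a(5)] u1 u2 by auto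
  obtain q1 x1 where q1: "plcL Fm (\<sigma> j1) = (q1, x1)" by (cases "plcL Fm (\<sigma> j1)")
  obtain q2 x2 where q2: "plcL Fm (\<sigma> j2) = (q2, x2)" by (cases "plcL Fm (\<sigma> j2)")
  have e: "q1 = q2" "x1 @ (fs ! j1) v1 = x2 @ (fs ! j2) v2" using s 1 2 q1 q2 by (auto simp: sem_def t)
  have l1: "locL Fm q1 (x1 @ (fs ! j1) v1) = Some (\<sigma> j1, (fs ! j1) v1)" using loc_plc(2)[OF _ q1] sj a(3) by simp
  have l2: "locL Fm q2 (x2 @ (fs ! j2) v2) = Some (\<sigma> j2, (fs ! j2) v2)" using loc_plc(2)[OF _ q2] sj a(3) by simp
  have "\<sigma> j1 = \<sigma> j2" "(fs ! j1) v1 = (fs ! j2) v2" using l1 l2 e by auto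
  then have jj: "j1 = j2" using permutes_inj[OF a(5)] by (auto dest: injD)
  have f: "fs ! j1 \<in> aut d" using nth_sub[OF subset_trans[OF a(6) Gaut] u1(1)] .
  have "v1 \<in> words d" "v2 \<in> words d" using locL_suffix[OF 1] locL_suffix[OF 2] w by (auto simp: words_iff)
  then have "v1 = v2" using \<open>(fs ! j1) v1 = (fs ! j2) v2\<close> jj aut_inj[OF f] by (auto dest: inj_onD)
  then show ?thesis using u1 u2 jj by simp
qed

lemma heads_tinv: "heads (tinv d t) = feet t" "feet (tinv d t) = heads t"
  by (auto simp: heads_def feet_def tinv_def)

lemma sem_eq_tinv:
  assumes va: "valid d G a" and vb: "valid d G b" and h: "heads a = heads b" and s: "sem_eq d a b"
  shows "sem_eq d (tinv d a) (tinv d b)"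
proof -
  obtain N where N: "\<forall>r w. w \<in> words d \<longrightarrow> N \<le> length w \<longrightarrow> sem a r w = sem b r w"
    using s by (auto simp: sem_eq_def)
  have via: "valid d G (tinv d a)" and vib: "valid d G (tinv d b)" using valid_tinv va vb by auto
  obtain Fa fa Ea where ae: "a = (Fa, fa, Ea)" by (cases a) auto
  obtain Fb fb Eb where be: "b = (Fb, fb, Eb)" by (cases b) auto
  have lF: "length Fa = length Fb" using h ae be by (simp add: heads_def)
  define M where "M = max (N + hgtL Fa) (max (hgtL Fa) (hgtL Fb))"
  show ?thesis unfolding sem_eq_def
  proof (intro exI allI impI)
    fix r w assume w: "w \<in> words d" "M \<le> length w"
    show "sem (tinv d a) r w = sem (tinv d b) r w"
    proof (cases "r < length Fa")
      case False
      then show ?thesis using lF ae be by (cases fa, cases fb) (simp add: tinv_def sem_None)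
    next
      case True
      obtain p1 where p1: "sem (tinv d a) r w = Some p1"
        using sem_total[of d G Ea "winv d fa" Fa w r] via ae w True M_def by (auto simp: tinv_def)
      obtain p2 where p2: "sem (tinv d b) r w = Some p2"
        using sem_total[of d G Eb "winv d fb" Fb w r] vib be w True lF M_def by (auto simp: tinv_def)
      obtain r1 w1 where rw1: "p1 = (r1, w1)" by (cases p1)
      obtain r2 w2 where rw2: "p2 = (r2, w2)" by (cases p2)
      have o1: "w1 \<in> words d \<and> length w \<le> length w1 + hgtL Fa"
        using sem_out[OF via Gaut w(1)] p1 rw1 ae by (simp add: tinv_def)
      have o2: "w2 \<in> words d" using sem_out[OF vib Gaut w(1)] p2 rw2 by simp
      have "sem a r1 w1 = Some (r, w)" using sem_tinv[OF va w(1)] p1 rw1 by simp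
      moreover have "sem a r1 w1 = sem b r1 w1" using N o1 w M_def by simp
      moreover have "sem b r2 w2 = Some (r, w)" using sem_tinv[OF vb w(1)] p2 rw2 by simp
      ultimately have "r1 = r2 \<and> w1 = w2" using sem_inj[OF vb] o1 o2 by metis
      then show ?thesis using p1 p2 rw1 rw2 by simp
    qed
  qed
qed

lemma ginv_cls:
  assumes va: "valid d G a"
  shows "ginv d G (cls d G a) = cls d G (tinv d a)"
proof
  show "cls d G (tinv d a) \<subseteq> ginv d G (cls d G a)"
    unfolding ginv_def using eqrel_refl by (cases a) (fastforce simp: in_cls tinv_def)
next
  show "ginv d G (cls d G a) \<subseteq> cls d G (tinv d a)"
  proof
    fix t assume "t \<in> ginv d G (cls d G a)"
    then obtain Fm f Fp where w: "(Fm, f, Fp) \<in> cls d G a" "((Fp, winv d f, Fm), t) \<in> eqrel d G"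
      unfolding ginv_def by blast
    have e: "(a, (Fm, f, Fp)) \<in> eqrel d G" using w(1) in_cls by auto
    have i: "valid d G (Fm, f, Fp) \<and> heads (Fm, f, Fp) = heads a \<and> feet (Fm, f, Fp) = feet a
      \<and> sem_eq d a (Fm, f, Fp)" using eqrel_inv[OF e va] .
    have ti: "tinv d (Fm, f, Fp) = (Fp, winv d f, Fm)" by (simp add: tinv_def)
    have "sem_eq d (tinv d a) (tinv d (Fm, f, Fp))" using sem_eq_tinv[OF va] i by metis
    moreover have "heads (tinv d a) = heads (tinv d (Fm, f, Fp))" "feet (tinv d a) = feet (tinv d (Fm, f, Fp))"
      using i heads_tinv by metis+
    ultimately have "(tinv d a, tinv d (Fm, f, Fp)) \<in> eqrel d G"
      using cls_eqI valid_tinv va i by metis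
    then show "t \<in> cls d G (tinv d a)" using w(2) ti eqrel_trans in_cls by metis
  qed
qed

end


lemma sem_root:
  assumes "valid d G t" "sem t r w = Some (r', w')"
  shows "r' < length (fst t)"
proof -
  obtain Fm \<sigma> fs Fp where t: "t = (Fm, (\<sigma>, fs), Fp)" by (cases t) auto
  have a: "fleaves Fm = length fs" "fleaves Fp = length fs" "\<sigma> permutes {0..<length fs}"
    using assms(1) by (auto simp: t valid_iff)
  obtain j v where jv: "locL Fp r w = Some (j, v)" using assms(2) by (cases "locL Fp r w") (auto simp: sem_def t)
  have "j < length fs" using loc_Some(2)[OF jv] a by simp
  then have "\<sigma> j < fleaves Fm" using permutes_in_image[OF a(3)] a by simp
  then have "fst (plcL Fm (\<sigma> j)) < length Fm" by (rule plcL_fst)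
  moreover have "r' = fst (plcL Fm (\<sigma> j))" using assms(2) jv by (cases "plcL Fm (\<sigma> j)") (auto simp: sem_def t)
  ultimately show ?thesis using t by simp
qed

lemma ev_eq_left: "ev_eq d f f1 \<Longrightarrow> good d g \<Longrightarrow> ev_eq d (ocomp f g) (ocomp f1 g)"
  using ocomp_cong ev_eq_refl by blast

lemma ev_eq_right: "ev_eq d g g1 \<Longrightarrow> good d g1 \<Longrightarrow> ev_eq d (ocomp f g) (ocomp f g1)"
  using ocomp_cong ev_eq_refl by blast

context gset
begin

lemma has_feet_cls: "valid d G a \<Longrightarrow> has_feet (cls d G a) m \<longleftrightarrow> feet a = m"
proof
  assume v: "valid d G a" and "has_feet (cls d G a) m"
  then obtain Fm f Fp where "(Fm, f, Fp) \<in> cls d G a" "length Fp = m" by (auto simp: has_feet_def)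
  then show "feet a = m" using eqrel_inv[OF _ v] in_cls by (fastforce simp: feet_def)
next
  assume "valid d G a" "feet a = m"
  then show "has_feet (cls d G a) m" using eqrel_refl by (cases a) (fastforce simp: has_feet_def in_cls feet_def)
qed

lemma has_heads_cls: "valid d G a \<Longrightarrow> has_heads (cls d G a) m \<longleftrightarrow> heads a = m"
proof
  assume v: "valid d G a" and "has_heads (cls d G a) m"
  then obtain Fm f Fp where "(Fm, f, Fp) \<in> cls d G a" "length Fm = m" by (auto simp: has_heads_def)
  then show "heads a = m" using eqrel_inv[OF _ v] in_cls by (fastforce simp: heads_def)
next
  assume "valid d G a" "heads a = m"
  then show "has_heads (cls d G a) m" using eqrel_refl by (cases a) (fastforce simp: has_heads_def in_cls heads_def)
qed

lemma grpd_iff: "X \<in> grpd d G \<longleftrightarrow> (\<exists>a. valid d G a \<and> X = cls d G a)"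
  by (auto simp: grpd_def)

lemma cls_sem_eq: "valid d G a \<Longrightarrow> valid d G b \<Longrightarrow> cls d G a = cls d G b \<Longrightarrow> ev_eq d (sem a) (sem b)
    \<and> heads a = heads b \<and> feet a = feet b"
proof -
  assume v: "valid d G a" "valid d G b" "cls d G a = cls d G b"
  then have "b \<in> cls d G a" using eqrel_refl in_cls by metis
  then have "(a, b) \<in> eqrel d G" by (simp add: in_cls)
  then show ?thesis using eqrel_inv[OF _ v(1)] sem_eq_ev by metis
qed

lemma gmult_cls':
  assumes "valid d G a" "valid d G b" "feet a = heads b" "gmult d G (cls d G a) (cls d G b) = cls d G p" "valid d G p"
  shows "ev_eq d (sem p) (ocomp (sem a) (sem b)) \<and> heads p = heads a \<and> feet p = feet b"
proof -
  obtain p' where p': "valid d G p'" "gmult d G (cls d G a) (cls d G b) = cls d G p'" "heads p' = heads a"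
    "feet p' = feet b" "ev_eq d (sem p') (ocomp (sem a) (sem b))" using gmult_cls[OF assms(1-3)] by blast
  have "ev_eq d (sem p) (sem p') \<and> heads p = heads p' \<and> feet p = feet p'"
    using cls_sem_eq[OF assms(5) p'(1)] assms(4) p'(2) by simp
  then show ?thesis using p' ev_eq_trans by metis
qed

lemma gmult_sem_char:
  assumes "valid d G a" "valid d G b" "feet a = heads b" "valid d G p" "heads p = heads a" "feet p = feet b"
    "ev_eq d (sem p) (ocomp (sem a) (sem b))"
  shows "gmult d G (cls d G a) (cls d G b) = cls d G p"
proof -
  obtain p' where p': "valid d G p'" "gmult d G (cls d G a) (cls d G b) = cls d G p'" "heads p' = heads a"
    "feet p' = feet b" "ev_eq d (sem p') (ocomp (sem a) (sem b))" using gmult_cls[OF assms(1-3)] by blast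
  have "cls d G p' = cls d G p"
    using cls_eq_sem[OF p'(1) assms(4)] p' assms(5-7) ev_eq_trans ev_eq_sym by metis
  then show ?thesis using p'(2) by simp
qed

lemma gmult_assoc:
  assumes "valid d G a" "valid d G b" "valid d G c" "feet a = heads b" "feet b = heads c"
  shows "gmult d G (cls d G a) (gmult d G (cls d G b) (cls d G c)) = gmult d G (gmult d G (cls d G a) (cls d G b)) (cls d G c)"
proof -
  obtain p where p: "valid d G p" "gmult d G (cls d G b) (cls d G c) = cls d G p" "heads p = heads b"
    "feet p = feet c" "ev_eq d (sem p) (ocomp (sem b) (sem c))" using gmult_cls[OF assms(2,3,5)] by blast
  obtain q where q: "valid d G q" "gmult d G (cls d G a) (cls d G b) = cls d G q" "heads q = heads a"
    "feet q = feet b" "ev_eq d (sem q) (ocomp (sem a) (sem b))" using gmult_cls[OF assms(1,2,4)] by blast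
  obtain s where s: "valid d G s" "gmult d G (cls d G a) (cls d G p) = cls d G s" "heads s = heads a"
    "feet s = feet p" "ev_eq d (sem s) (ocomp (sem a) (sem p))" using gmult_cls[OF assms(1) p(1)] assms(4) p(3) by metis
  have "ev_eq d (sem s) (ocomp (ocomp (sem a) (sem b)) (sem c))"
  proof -
    have "ev_eq d (ocomp (sem a) (sem p)) (ocomp (sem a) (ocomp (sem b) (sem c)))"
      using ev_eq_right[OF p(5)] good_ocomp good_sem assms(2,3) by blast
    then show ?thesis using s(5) ocomp_assoc ev_eq_trans by metis
  qed
  moreover have "ev_eq d (ocomp (sem q) (sem c)) (ocomp (ocomp (sem a) (sem b)) (sem c))"
    using ev_eq_left[OF q(5)] good_sem assms(3) by blast
  ultimately have "ev_eq d (sem s) (ocomp (sem q) (sem c))" using ev_eq_trans ev_eq_sym by metis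
  then have "gmult d G (cls d G q) (cls d G c) = cls d G s"
    using gmult_sem_char[OF q(1) assms(3) _ s(1)] q s p assms(5) by simp
  then show ?thesis using p(2) q(2) s(2) by simp
qed

lemma inv_cancel:
  assumes va: "valid d G a" and vb: "valid d G b" and h: "heads a = heads b"
  shows "ev_eq d (ocomp (sem a) (ocomp (sem (tinv d a)) (sem b))) (sem b)"
proof -
  obtain Hb where Hb: "\<forall>r w r' w'. w \<in> words d \<longrightarrow> sem b r w = Some (r', w') \<longrightarrow> w' \<in> words d \<and> length w \<le> length w' + Hb"
    using good_sem[OF vb] by (auto simp: good_def)
  obtain Fa fa Ea where ae: "a = (Fa, fa, Ea)" by (cases a) auto
  have vi: "valid d G (tinv d a)" using valid_tinv[OF va] .
  show ?thesis unfolding ev_eq_def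
  proof (intro exI allI impI)
    fix r w assume w: "w \<in> words d" "hgtL Fa + Hb \<le> length w"
    show "ocomp (sem a) (ocomp (sem (tinv d a)) (sem b)) r w = sem b r w"
    proof (cases "sem b r w")
      case None then show ?thesis by (simp add: ocomp_def)
    next
      case (Some p)
      obtain r' w' where p: "p = (r', w')" by (cases p)
      have o: "w' \<in> words d" "length w \<le> length w' + Hb" using Hb w(1) Some p by auto
      have r': "r' < length Fa" using sem_root[OF vb] Some p h ae by (simp add: heads_def)
      obtain p1 where p1: "sem (tinv d a) r' w' = Some p1"
        using sem_total[of d G Ea "winv d fa" Fa w' r'] vi ae o w r' by (auto simp: tinv_def)
      obtain r1 w1 where rw1: "p1 = (r1, w1)" by (cases p1)
      have "sem a r1 w1 = Some (r', w')" using sem_tinv[OF va o(1)] p1 rw1 by simp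
      then show ?thesis using Some p p1 rw1 by (simp add: ocomp_def)
    qed
  qed
qed

end


lemma wmult_wr_gen:
  assumes "\<forall>f\<in>S. \<forall>g\<in>S'. f \<circ> g \<in> S" "(\<sigma>, fs) \<in> wr n S" "(\<tau>, gs) \<in> wr n S'"
  shows "wmult (\<sigma>, fs) (\<tau>, gs) \<in> wr n S"
proof -
  have a: "\<sigma> permutes {0..<n}" "length fs = n" "set fs \<subseteq> S" "\<tau> permutes {0..<n}" "length gs = n" "set gs \<subseteq> S'"
    using assms by (auto simp: wr_def)
  have "\<And>i. i < n \<Longrightarrow> fs ! (\<tau> i) \<circ> gs ! i \<in> S"
  proof -
    fix i assume i: "i < n"
    have "\<tau> i < n" using permutes_in_image[OF a(4)] i by simp
    then show "fs ! (\<tau> i) \<circ> gs ! i \<in> S" using assms(1) nth_sub[OF a(3)] nth_sub[OF a(6)] a i by simp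
  qed
  then show ?thesis using a by (auto simp: wmult_def wr_def intro: permutes_compose)
qed

lemma winv_wr_gen:
  assumes "\<forall>f\<in>S. ainv d f \<in> S" "(\<sigma>, fs) \<in> wr n S"
  shows "winv d (\<sigma>, fs) \<in> wr n S"
proof -
  have a: "\<sigma> permutes {0..<n}" "length fs = n" "set fs \<subseteq> S" using assms by (auto simp: wr_def)
  have p: "inv \<sigma> permutes {0..<n}" using permutes_inv[OF a(1)] .
  have "\<And>i. i < n \<Longrightarrow> ainv d (fs ! (inv \<sigma> i)) \<in> S"
  proof -
    fix i assume "i < n"
    then have "inv \<sigma> i < n" using permutes_in_image[OF p] by simp
    then show "ainv d (fs ! (inv \<sigma> i)) \<in> S" using assms(1) nth_sub[OF a(3)] a(2) by simp
  qed
  then show ?thesis using a p by (auto simp: winv_def wr_def)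
qed

lemma wr_mono: "S \<subseteq> S' \<Longrightarrow> w \<in> wr n S \<Longrightarrow> w \<in> wr n S'"
  by (auto simp: wr_def)

definition ht :: "nat \<Rightarrow> wel \<Rightarrow> triple" where
  "ht n w = (triv n, w, triv n)"

lemma ht_heads_feet[simp]: "heads (ht n w) = n" "feet (ht n w) = n"
  by (simp_all add: ht_def heads_def feet_def triv_def)

locale hset = gset +
  fixes H :: "(nat list \<Rightarrow> nat list) set"
  assumes Hsub: "subgrp d H" and HG: "H \<subseteq> G"
begin

lemma Hcomp: "\<forall>f\<in>H. \<forall>g\<in>H. f \<circ> g \<in> H" using Hsub by (auto simp: subgrp_def)
lemma Hinv: "\<forall>f\<in>H. ainv d f \<in> H" using Hsub by (auto simp: subgrp_def)
lemma Hid: "id \<in> H" using Hsub by (auto simp: subgrp_def)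

lemma valid_ht: "w \<in> wr n H \<Longrightarrow> valid d G (ht n w)"
  using wr_mono[OF HG] by (cases w) (auto simp: valid_def ht_def triv_def forest_def wr_def nleaves_rep)

lemma idt_ht: "idt n = ht n (id, replicate n id)"
  by (simp add: idt_def ht_def)

lemma id_wr: "(id, replicate n id) \<in> wr n H"
  using Hid by (auto simp: wr_def permutes_id)

lemma coset_iff:
  assumes "valid d G a"
  shows "Z \<in> coset d G H (cls d G a) \<longleftrightarrow> (\<exists>w \<in> wr (feet a) H. Z = gmult d G (cls d G a) (cls d G (ht (feet a) w)))"
  using has_feet_cls[OF assms] by (auto simp: coset_def ht_def)

lemma self_mem:
  assumes va: "valid d G a"
  shows "cls d G a \<in> coset d G H (cls d G a)"
proof -
  define n where "n = feet a"
  have "gmult d G (cls d G a) (cls d G (idt n)) = cls d G a"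
  proof (rule gmult_sem_char[OF va valid_idt])
    show "feet a = heads (idt n)" by (simp add: n_def idt_ht)
    show "ev_eq d (sem a) (ocomp (sem a) (sem (idt n)))" unfolding ev_eq_def
    proof (intro exI allI impI)
      fix r w
      show "sem a r w = ocomp (sem a) (sem (idt n)) r w"
      proof (cases "r < n")
        case False
        then show ?thesis using n_def by (cases a) (auto simp: ocomp_def sem_idt feet_def sem_None)
      qed (simp add: ocomp_def sem_idt)
    qed
  qed (use va in \<open>auto simp: n_def idt_ht\<close>)
  then show ?thesis using coset_iff[OF va] id_wr idt_ht n_def by metis
qed

lemma coset_mem_rep:
  assumes va: "valid d G a" and z: "Z \<in> coset d G H (cls d G a)"
  shows "\<exists>z w. valid d G z \<and> Z = cls d G z \<and> heads z = heads a \<and> feet z = feet a \<and> w \<in> wr (feet a) H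
     \<and> ev_eq d (sem z) (ocomp (sem a) (sem (ht (feet a) w)))"
proof -
  obtain w where w: "w \<in> wr (feet a) H" "Z = gmult d G (cls d G a) (cls d G (ht (feet a) w))"
    using coset_iff[OF va] z by blast
  obtain p where p: "valid d G p" "gmult d G (cls d G a) (cls d G (ht (feet a) w)) = cls d G p" "heads p = heads a"
    "feet p = feet (ht (feet a) w)" "ev_eq d (sem p) (ocomp (sem a) (sem (ht (feet a) w)))"
    using gmult_cls[OF va valid_ht[OF w(1)]] by auto
  have "Z = cls d G p" "feet p = feet a" using p w by auto
  then show ?thesis using p w by blast
qed

lemma tinv_ht: "tinv d (ht n w) = ht n (winv d w)"
  by (simp add: tinv_def ht_def)

lemma tprod_ht: "tprod (ht n w1) (ht n w2) = ht n (wmult w1 w2)"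
  by (simp add: tprod_def ht_def)

lemma sem_ht_prod:
  assumes "w1 \<in> wr n H" "w2 \<in> wr n H"
  shows "ev_eq d (sem (ht n (wmult w1 w2))) (ocomp (sem (ht n w1)) (sem (ht n w2)))"
proof -
  have "\<forall>r w. w \<in> words d \<longrightarrow> sem (ht n (wmult w1 w2)) r w = ocomp (sem (ht n w1)) (sem (ht n w2)) r w"
    using sem_tprod[of "triv n" w1 "triv n" w2 "triv n"] valid_ht[OF assms(1)] valid_ht[OF assms(2)]
    by (simp add: ht_def tprod_def comp_sem_ocomp)
  then show ?thesis unfolding ev_eq_def by blast
qed

lemma wmult_H: "w1 \<in> wr n H \<Longrightarrow> w2 \<in> wr n H \<Longrightarrow> wmult w1 w2 \<in> wr n H"
  using wmult_wr_gen[OF Hcomp] by (cases w1, cases w2) auto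

lemma winv_H: "w \<in> wr n H \<Longrightarrow> winv d w \<in> wr n H"
  using winv_wr_gen[OF Hinv] by (cases w) auto

lemma coset_sub:
  assumes va: "valid d G a" and vb: "valid d G b" and hh: "heads a = heads b" and ff: "feet a = n" "feet b = n"
    and w: "w \<in> wr n H" and e: "ev_eq d (sem b) (ocomp (sem a) (sem (ht n w)))"
  shows "coset d G H (cls d G b) \<subseteq> coset d G H (cls d G a)"
proof
  fix Z assume "Z \<in> coset d G H (cls d G b)"
  then obtain z w' where z: "valid d G z" "Z = cls d G z" "heads z = heads b" "feet z = feet b" "w' \<in> wr n H"
    "ev_eq d (sem z) (ocomp (sem b) (sem (ht n w')))" using coset_mem_rep[OF vb] ff by metis
  have w2: "wmult w w' \<in> wr n H" using wmult_H w z(5) by blast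
  have "ev_eq d (sem z) (ocomp (sem a) (sem (ht n (wmult w w'))))"
  proof -
    have 1: "ev_eq d (ocomp (sem b) (sem (ht n w'))) (ocomp (ocomp (sem a) (sem (ht n w))) (sem (ht n w')))"
      using ev_eq_left[OF e good_sem[OF valid_ht[OF z(5)]]] .
    have 2: "ev_eq d (ocomp (sem a) (ocomp (sem (ht n w)) (sem (ht n w')))) (ocomp (sem a) (sem (ht n (wmult w w'))))"
      using ev_eq_right[OF ev_eq_sym[OF sem_ht_prod[OF w z(5)]] good_sem[OF valid_ht[OF w2]]] .
    show ?thesis using z(6) 1 2 ocomp_assoc ev_eq_trans by metis
  qed
  then have "gmult d G (cls d G a) (cls d G (ht n (wmult w w'))) = Z"
    using gmult_sem_char[OF va valid_ht[OF w2] _ z(1)] z ff hh by simp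
  then show "Z \<in> coset d G H (cls d G a)" using coset_iff[OF va] ff w2 by metis
qed

lemma coset_eq:
  assumes va: "valid d G a" and vb: "valid d G b" and hh: "heads a = heads b" and ff: "feet a = n" "feet b = n"
    and w: "w \<in> wr n H" and e: "ev_eq d (sem b) (ocomp (sem a) (sem (ht n w)))"
  shows "coset d G H (cls d G a) = coset d G H (cls d G b)"
proof
  show "coset d G H (cls d G b) \<subseteq> coset d G H (cls d G a)" using coset_sub[OF assms] .
  have wi: "winv d w \<in> wr n H" using winv_H[OF w] .
  have "ev_eq d (sem a) (ocomp (sem b) (sem (ht n (winv d w))))"
  proof -
    have 1: "ev_eq d (ocomp (sem b) (sem (ht n (winv d w)))) (ocomp (ocomp (sem a) (sem (ht n w))) (sem (ht n (winv d w))))"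
      using ev_eq_left[OF e good_sem[OF valid_ht[OF wi]]] .
    have "ev_eq d (ocomp (sem (ht n w)) (ocomp (sem (tinv d (ht n w))) (sem (idt n)))) (sem (idt n))"
      using inv_cancel[OF valid_ht[OF w] valid_idt] by (simp add: idt_ht)
    moreover have "\<forall>r x. x \<in> words d \<longrightarrow> ocomp (sem (tinv d (ht n w))) (sem (idt n)) r x = sem (tinv d (ht n w)) r x"
      by (auto simp: ocomp_def sem_idt tinv_def ht_def sem_None triv_def)
    ultimately have "ev_eq d (ocomp (sem (ht n w)) (sem (ht n (winv d w)))) (sem (idt n))"
      unfolding ev_eq_def ocomp_def tinv_ht by auto
    then have 2: "ev_eq d (ocomp (sem a) (ocomp (sem (ht n w)) (sem (ht n (winv d w))))) (ocomp (sem a) (sem (idt n)))"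
      using ev_eq_right good_sem valid_idt by blast
    have 3: "\<forall>r x. ocomp (sem a) (sem (idt n)) r x = sem a r x"
      using ff by (cases a) (auto simp: ocomp_def sem_idt feet_def sem_None)
    show ?thesis using 1 2 3 ocomp_assoc ev_eq_trans ev_eq_sym
      by (metis (no_types, lifting) ev_eq_def)
  qed
  then show "coset d G H (cls d G a) \<subseteq> coset d G H (cls d G b)"
    using coset_sub[OF vb va hh[symmetric] ff(2,1) wi] by blast
qed

end


lemma aut_nth_take:
  assumes "a \<in> aut d" "W \<in> words d" "i < length W"
  shows "a W ! i = a (take (Suc i) W) ! i"
proof -
  have tw: "take (Suc i) W \<in> words d" "drop (Suc i) W \<in> words d" using assms(2)
    by (auto simp: words_iff dest: in_set_takeD in_set_dropD)
  have "take (length (take (Suc i) W)) (a (take (Suc i) W @ drop (Suc i) W)) = a (take (Suc i) W)"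
    using aut_pref[OF assms(1) tw] .
  then have "take (Suc i) (a W) = a (take (Suc i) W)" using assms(3) by simp
  moreover have "i < length (a W)" using aut_len[OF assms(1,2)] assms(3) by simp
  ultimately show ?thesis by (metis lessI nth_take)
qed

lemma bump:
  fixes d x :: nat
  assumes "2 \<le> d" "x < d"
  shows "(x + 1) mod d < d" "(x + 1) mod d \<noteq> x"
proof -
  show "(x + 1) mod d < d" using assms by simp
  show "(x + 1) mod d \<noteq> x"
  proof (cases "x + 1 < d")
    case True then show ?thesis by simp
  next
    case False then have "x + 1 = d" using assms by simp
    then show ?thesis using assms by simp
  qed
qed

lemma vd_depth:
  assumes d2: "2 \<le> d" and aa: "a \<in> aut d" and vd: "in_Vd d a"
  shows "\<exists>D. \<forall>u\<in>words d. \<forall>v\<in>words d. length u = D \<longrightarrow> a (u @ v) = a u @ v"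
proof -
  obtain C1 C2 \<beta> where c1: "complete_prefix_code d C1" and bij: "bij_betw \<beta> C1 C2"
    and act: "\<forall>\<xi>\<in>boundary d. \<forall>u\<in>C1. is_prefix u \<xi> \<longrightarrow>
           bdry_act a \<xi> = (\<lambda>i. if i < length (\<beta> u) then \<beta> u ! i
                                else \<xi> (i - length (\<beta> u) + length u))"
    using vd unfolding in_Vd_def by blast
  have fin: "finite C1" and cw: "C1 \<subseteq> words d" and cp: "\<forall>\<xi>\<in>boundary d. \<exists>!u. u \<in> C1 \<and> is_prefix u \<xi>"
    using c1 by (auto simp: complete_prefix_code_def)
  define D where "D = Max (insert 0 (length ` C1))"
  have uD: "\<And>u. u \<in> C1 \<Longrightarrow> length u \<le> D" unfolding D_def using fin by simp
  show ?thesis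
  proof (intro exI ballI impI)
    fix u0 v assume u0: "u0 \<in> words d" and v: "v \<in> words d" and lu0: "length u0 = D"
    define W where "W = u0 @ v"
    have Ww: "W \<in> words d" using u0 v by (simp add: W_def words_iff)
    define \<xi> where "\<xi> = (\<lambda>i. if i < length W then W ! i else 0)"
    have bd: "\<And>\<zeta>. (\<forall>i. \<zeta> i < d) \<Longrightarrow> \<zeta> \<in> boundary d" by (simp add: boundary_def)
    have \<xi>b: "\<xi> \<in> boundary d" using Ww d2 by (intro bd) (auto simp: \<xi>_def words_iff dest: nth_mem)
    obtain u where u: "u \<in> C1" "is_prefix u \<xi>" using cp \<xi>b by blast
    have lu: "length u \<le> D" using uD[OF u(1)] .
    define s where "s = length (\<beta> u)"
    define l where "l = length u"
    have form: "\<And>\<zeta> i. \<zeta> \<in> boundary d \<Longrightarrow> is_prefix u \<zeta> \<Longrightarrow>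
        a (map \<zeta> [0..<Suc i]) ! i = (if i < s then \<beta> u ! i else \<zeta> (i - s + l))"
    proof -
      fix \<zeta> i assume "\<zeta> \<in> boundary d" "is_prefix u \<zeta>"
      then have "bdry_act a \<zeta> = (\<lambda>i. if i < s then \<beta> u ! i else \<zeta> (i - s + l))"
        using act u(1) s_def l_def by blast
      then show "a (map \<zeta> [0..<Suc i]) ! i = (if i < s then \<beta> u ! i else \<zeta> (i - s + l))"
        by (simp add: bdry_act_def fun_eq_iff)
    qed
    define chg where "chg = (\<lambda>j. \<xi>(j := (\<xi> j + 1) mod d))"
    have chgb: "\<And>j. chg j \<in> boundary d" using \<xi>b d2 by (auto simp: chg_def boundary_def)
    have chgne: "\<And>j. chg j j \<noteq> \<xi> j" using \<xi>b bump[OF d2] by (auto simp: chg_def boundary_def)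
    have chgp: "\<And>j. l \<le> j \<Longrightarrow> is_prefix u (chg j)" using u(2) by (auto simp: is_prefix_def chg_def l_def)
    have mapw: "\<And>\<zeta> n. (\<forall>i. \<zeta> i < d) \<Longrightarrow> map \<zeta> [0..<n] \<in> words d" by (auto simp: words_iff)
    have sl: "s = l"
    proof (rule ccontr)
      assume "s \<noteq> l"
      then consider "s < l" | "l < s" by linarith
      then show False
      proof cases
        case 1
        define j where "j = l - 1 - s + l"
        have j: "l \<le> j" using 1 by (simp add: j_def)
        have nl: "\<not> l - 1 < s" using 1 by linarith
        have e1: "a (map \<xi> [0..<Suc (l - 1)]) ! (l - 1) = \<xi> j"
          using form[OF \<xi>b u(2), of "l - 1"] nl unfolding j_def by presburger
        have e2: "a (map (chg j) [0..<Suc (l - 1)]) ! (l - 1) = chg j j"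
          using form[OF chgb chgp[OF j], of "l - 1"] nl unfolding j_def by presburger
        have "map (chg j) [0..<Suc (l - 1)] = map \<xi> [0..<Suc (l - 1)]" using j 1 by (auto simp: chg_def)
        then show False using e1 e2 chgne by metis
      next
        case 2
        define N where "N = Suc s"
        have p: "is_prefix u (chg s)" using chgp 2 by simp
        have w1: "map \<xi> [0..<N] \<in> words d" "map (chg s) [0..<N] \<in> words d"
          using mapw \<xi>b chgb by (auto simp: boundary_def)
        have eq: "a (map \<xi> [0..<N]) = a (map (chg s) [0..<N])"
        proof (rule nth_equalityI)
          show "length (a (map \<xi> [0..<N])) = length (a (map (chg s) [0..<N]))"
            using aut_len[OF aa w1(1)] aut_len[OF aa w1(2)] by simp
        next
          fix i assume i: "i < length (a (map \<xi> [0..<N]))"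
          then have iN: "i < N" using aut_len[OF aa w1(1)] by simp
          have t1: "take (Suc i) (map \<xi> [0..<N]) = map \<xi> [0..<Suc i]" using iN by (simp add: take_map)
          have t2: "take (Suc i) (map (chg s) [0..<N]) = map (chg s) [0..<Suc i]" using iN by (simp add: take_map)
          have "a (map \<xi> [0..<N]) ! i = (if i < s then \<beta> u ! i else \<xi> (i - s + l))"
            using aut_nth_take[OF aa w1(1)] iN t1 form[OF \<xi>b u(2)] by simp
          moreover have "a (map (chg s) [0..<N]) ! i = (if i < s then \<beta> u ! i else chg s (i - s + l))"
            using aut_nth_take[OF aa w1(2)] iN t2 form[OF chgb p] by simp
          moreover have "\<not> i < s \<Longrightarrow> chg s (i - s + l) = \<xi> (i - s + l)" using iN 2 N_def by (auto simp: chg_def)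
          ultimately show "a (map \<xi> [0..<N]) ! i = a (map (chg s) [0..<N]) ! i" by simp
        qed
        moreover have "map \<xi> [0..<N] \<noteq> map (chg s) [0..<N]"
        proof
          assume "map \<xi> [0..<N] = map (chg s) [0..<N]"
          then have "\<xi> s = chg s s" using N_def by (metis (no_types, lifting) diff_zero length_upt lessI map_eq_conv nth_map nth_upt plus_nat.add_0 set_upt atLeastLessThan_iff zero_le)
          then show False using chgne by metis
        qed
        ultimately show False using aut_inj[OF aa] w1 by (auto dest: inj_onD)
      qed
    qed
    show "a (u0 @ v) = a u0 @ v"
    proof (rule nth_equalityI)
      show "length (a (u0 @ v)) = length (a u0 @ v)" using aut_len[OF aa Ww] aut_len[OF aa u0] by (simp add: W_def)
    next
      fix i assume i: "i < length (a (u0 @ v))"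
      then have iW: "i < length W" using aut_len[OF aa Ww] W_def by simp
      have tW: "take (Suc i) W = map \<xi> [0..<Suc i]"
        using iW by (intro nth_equalityI) (auto simp: \<xi>_def simp del: upt_Suc)
      have ai: "a W ! i = (if i < s then \<beta> u ! i else \<xi> (i - s + l))"
        using aut_nth_take[OF aa Ww iW] tW form[OF \<xi>b u(2)] by simp
      show "a (u0 @ v) ! i = (a u0 @ v) ! i"
      proof (cases "i < D")
        case True
        have "take D (a (u0 @ v)) = a u0" using aut_pref[OF aa u0 v] lu0 by simp
        then have "a (u0 @ v) ! i = a u0 ! i" using True by (metis nth_take)
        then show ?thesis using True lu0 aut_len[OF aa u0] by (simp add: nth_append)
      next
        case False
        then have "\<not> i < s" using sl lu l_def by simp
        then have "a W ! i = W ! i" using ai sl iW by (simp add: \<xi>_def)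
        then show ?thesis using False lu0 aut_len[OF aa u0] by (simp add: W_def nth_append)
      qed
    qed
  qed
qed


definition Bset :: "nat \<Rightarrow> nat \<Rightarrow> (nat list \<Rightarrow> nat list) set" where
  "Bset d D = {g. (\<forall>w. w \<notin> words d \<longrightarrow> g w = w) \<and> (\<forall>w\<in>words d. g w \<in> words d \<and> length (g w) = length w)
      \<and> (\<forall>u\<in>words d. \<forall>v\<in>words d. length u = D \<longrightarrow> g (u @ v) = g u @ v)}"

lemma depth_ge:
  assumes "\<forall>u\<in>words d. \<forall>v\<in>words d. length u = D \<longrightarrow> g (u @ v) = g u @ v" "\<forall>w\<in>words d. length (g w) = length w"
    "u \<in> words d" "v \<in> words d" "D \<le> length u"
  shows "g (u @ v) = g u @ v"
proof -
  define u1 where "u1 = take D u"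
  define u2 where "u2 = drop D u"
  have w: "u1 \<in> words d" "u2 \<in> words d" "u2 @ v \<in> words d" using assms(3,4)
    by (auto simp: u1_def u2_def words_iff dest: in_set_takeD in_set_dropD)
  have l: "length u1 = D" using assms(5) by (simp add: u1_def)
  have "g (u @ v) = g (u1 @ (u2 @ v))" by (metis append_assoc append_take_drop_id u1_def u2_def)
  also have "\<dots> = g u1 @ u2 @ v" using assms(1) w l by blast
  also have "g u = g u1 @ u2" using assms(1) w l by (metis append_take_drop_id u1_def u2_def)
  ultimately show ?thesis by simp
qed

lemma B_ge: "g \<in> Bset d D \<Longrightarrow> u \<in> words d \<Longrightarrow> v \<in> words d \<Longrightarrow> D \<le> length u \<Longrightarrow> g (u @ v) = g u @ v"
  using depth_ge[of d D g u v] by (auto simp: Bset_def)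

lemma B_id: "id \<in> Bset d D"
  by (simp add: Bset_def)

lemma B_comp: "g \<in> Bset d D \<Longrightarrow> a \<in> Bset d D \<Longrightarrow> g \<circ> a \<in> Bset d D"
  unfolding Bset_def by auto

lemma B_state:
  assumes g: "g \<in> Bset d D" and y: "y < d"
  shows "state d g y \<in> Bset d D"
proof -
  have a: "\<forall>w. w \<notin> words d \<longrightarrow> g w = w" "\<forall>w\<in>words d. g w \<in> words d \<and> length (g w) = length w"
    using g by (auto simp: Bset_def)
  have 1: "\<forall>w. w \<notin> words d \<longrightarrow> state d g y w = w" by (simp add: state_def)
  have 2: "\<forall>w\<in>words d. state d g y w \<in> words d \<and> length (state d g y w) = length w"
  proof
    fix w assume w: "w \<in> words d"
    then have yw: "y # w \<in> words d" using y by (simp add: words_iff)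
    then have "g (y # w) \<in> words d" "length (g (y # w)) = Suc (length w)" using a by auto
    then show "state d g y w \<in> words d \<and> length (state d g y w) = length w"
      using w by (cases "g (y # w)") (auto simp: state_def words_iff)
  qed
  have 3: "\<forall>u\<in>words d. \<forall>v\<in>words d. length u = D \<longrightarrow> state d g y (u @ v) = state d g y u @ v"
  proof (intro ballI impI)
    fix u v assume u: "u \<in> words d" and v: "v \<in> words d" and l: "length u = D"
    have yu: "y # u \<in> words d" using u y by (simp add: words_iff)
    have "g ((y # u) @ v) = g (y # u) @ v" using B_ge[OF g yu v] l by simp
    moreover have "g (y # u) \<noteq> []" using a yu by fastforce
    moreover have "u @ v \<in> words d" using u v by (simp add: words_iff)
    ultimately show "state d g y (u @ v) = state d g y u @ v" using u by (simp add: state_def)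
  qed
  show ?thesis using 1 2 3 by (simp add: Bset_def)
qed

lemma B_dest:
  assumes "g \<in> Bset d D"
  shows "\<And>w. w \<notin> words d \<Longrightarrow> g w = w" "\<And>w. w \<in> words d \<Longrightarrow> g w \<in> words d"
    "\<And>w. w \<in> words d \<Longrightarrow> length (g w) = length w"
    "\<And>u v. u \<in> words d \<Longrightarrow> v \<in> words d \<Longrightarrow> length u = D \<Longrightarrow> g (u @ v) = g u @ v"
  using assms unfolding Bset_def by simp_all

lemma B_finite:
  shows "finite (Bset d D)"
proof -
  define S where "S = {w. set w \<subseteq> {0..<d} \<and> length w \<le> D}"
  have fS: "finite S" unfolding S_def by (rule finite_lists_length_le) simp
  have Sw: "\<And>w. w \<in> S \<longleftrightarrow> w \<in> words d \<and> length w \<le> D" by (simp add: S_def words_iff)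
  have inj: "inj_on (\<lambda>g. restrict g S) (Bset d D)"
  proof
    fix g1 g2 assume g: "g1 \<in> Bset d D" "g2 \<in> Bset d D" "restrict g1 S = restrict g2 S"
    have eqS: "\<And>w. w \<in> S \<Longrightarrow> g1 w = g2 w"
    proof -
      fix w assume "w \<in> S"
      then have "restrict g1 S w = g1 w" "restrict g2 S w = g2 w" by simp_all
      then show "g1 w = g2 w" using g(3) by simp
    qed
    show "g1 = g2"
    proof
      fix w
      show "g1 w = g2 w"
      proof (cases "w \<in> words d")
        case False then show ?thesis using B_dest(1)[OF g(1)] B_dest(1)[OF g(2)] by metis
      next
        case True
        show ?thesis
        proof (cases "length w \<le> D")
          case True then show ?thesis using eqS Sw \<open>w \<in> words d\<close> by blast
        next
          case False
          define u where "u = take D w"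
          define v where "v = drop D w"
          have uv: "u \<in> words d" "v \<in> words d" "length u = D" using True False
            by (auto simp: u_def v_def words_iff dest: in_set_takeD in_set_dropD)
          have wuv: "w = u @ v" by (simp add: u_def v_def)
          have "g1 (u @ v) = g1 u @ v" "g2 (u @ v) = g2 u @ v"
            using B_dest(4)[OF g(1) uv] B_dest(4)[OF g(2) uv] by blast+
          moreover have "g1 u = g2 u" using eqS Sw uv by simp
          ultimately show ?thesis using wuv by metis
        qed
      qed
    qed
  qed
  have sub: "(\<lambda>g. restrict g S) ` Bset d D \<subseteq> S \<rightarrow>\<^sub>E S"
  proof
    fix x assume "x \<in> (\<lambda>g. restrict g S) ` Bset d D"
    then obtain g where g: "g \<in> Bset d D" "x = restrict g S" by blast
    have "\<And>w. w \<in> S \<Longrightarrow> g w \<in> S"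
    proof -
      fix w assume "w \<in> S"
      then have w: "w \<in> words d" "length w \<le> D" using Sw by blast+
      then have "g w \<in> words d" "length (g w) \<le> D" using B_dest(2,3)[OF g(1)] by auto
      then show "g w \<in> S" using Sw by blast
    qed
    then show "x \<in> S \<rightarrow>\<^sub>E S" unfolding g(2) restrict_PiE_iff by blast
  qed
  have fP: "finite (S \<rightarrow>\<^sub>E S)" using fS by (intro finite_PiE) simp_all
  have "finite ((\<lambda>g. restrict g S) ` Bset d D)" by (rule finite_subset[OF sub fP])
  then show ?thesis by (rule finite_imageD[OF _ inj])
qed

lemma state_comp:
  assumes "h \<in> aut d" "x < d"
  shows "state d (b \<circ> h) x = state d b (rho d h x) \<circ> state d h x"
proof
  fix w
  show "state d (b \<circ> h) x w = (state d b (rho d h x) \<circ> state d h x) w"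
  proof (cases "w \<in> words d")
    case True
    have sw: "state d h x w \<in> words d" using state_words[OF assms True] .
    have "state d (b \<circ> h) x w = tl (b (h (x # w)))" using True by (simp add: state_def)
    also have "\<dots> = tl (b (rho d h x # state d h x w))" using rho_cons(1)[OF assms True] by simp
    also have "\<dots> = state d b (rho d h x) (state d h x w)" using sw unfolding state_def[of d b] by simp
    finally show ?thesis by simp
  next
    case False then show ?thesis by (simp add: state_def)
  qed
qed

lemma nleaves_hgt:
  "full d t \<Longrightarrow> 2 \<le> d \<Longrightarrow> hgt t + 1 \<le> nleaves t"
  "(\<forall>t\<in>set ts. full d t) \<Longrightarrow> 2 \<le> d \<Longrightarrow> ts \<noteq> [] \<Longrightarrow> hgtL ts + length ts \<le> fleaves ts"
proof (induction t and ts rule: hgt_hgtL.induct)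
  case 1 then show ?case by simp
next
  case (2 ts)
  have l: "length ts = d" and f: "\<forall>t\<in>set ts. full d t" using 2(2) by simp_all
  then have "ts \<noteq> []" using 2(3) by auto
  then have "hgtL ts + length ts \<le> fleaves ts" using 2(1) f 2(3) by blast
  then show ?case using l 2(3) by (simp add: nleaves_Nd)
next
  case 3 then show ?case by simp
next
  case (4 t ts)
  have ft: "full d t" and fts: "\<forall>t\<in>set ts. full d t" using 4(3) by simp_all
  have a: "hgt t + 1 \<le> nleaves t" using 4(1) ft 4(4) by blast
  show ?case
  proof (cases "ts = []")
    case True then show ?thesis using a by simp
  next
    case False
    have b: "hgtL ts + length ts \<le> fleaves ts" using 4(2) fts 4(4) False by blast
    have "max (hgt t) (hgtL ts) \<le> hgt t + hgtL ts" by simp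
    then show ?thesis using a b by simp
  qed
qed

lemma nleaves_pos: "full d t \<Longrightarrow> 2 \<le> d \<Longrightarrow> 1 \<le> nleaves t"
  using nleaves_hgt(1) by fastforce

lemma hgt_mem: "s \<in> set ts \<Longrightarrow> hgt s \<le> hgtL ts"
proof (induction ts)
  case Nil then show ?case by simp
next
  case (Cons a ts)
  show ?case
  proof (cases "s = a")
    case True then show ?thesis by simp
  next
    case False
    then have "hgt s \<le> hgtL ts" using Cons by simp
    then show ?thesis by simp
  qed
qed

lemma finite_trees: "finite {t. full d t \<and> hgt t \<le> h}"
proof (induction h)
  case 0
  have "{t. full d t \<and> hgt t \<le> 0} \<subseteq> {Lf}"
  proof
    fix t assume "t \<in> {t. full d t \<and> hgt t \<le> 0}"
    then show "t \<in> {Lf}" by (cases t) simp_all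
  qed
  then show ?case by (rule finite_subset) simp
next
  case (Suc h)
  define L where "L = {ts. set ts \<subseteq> {t. full d t \<and> hgt t \<le> h} \<and> length ts = d}"
  have sub: "{t. full d t \<and> hgt t \<le> Suc h} \<subseteq> insert Lf (Nd ` L)"
  proof
    fix t assume t: "t \<in> {t. full d t \<and> hgt t \<le> Suc h}"
    show "t \<in> insert Lf (Nd ` L)"
    proof (cases t)
      case Lf then show ?thesis by simp
    next
      case (Nd ts)
      have f: "length ts = d" "\<forall>s\<in>set ts. full d s" "hgtL ts \<le> h" using t Nd by simp_all
      have "ts \<in> L" unfolding L_def using f hgt_mem by fastforce
      then show ?thesis using Nd by simp
    qed
  qed
  have "finite L" unfolding L_def by (rule finite_lists_length_eq[OF Suc.IH])
  then have "finite (insert Lf (Nd ` L))" by simp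
  then show ?case by (rule finite_subset[OF sub])
qed

lemma finite_forests:
  assumes "2 \<le> d"
  shows "finite {T. forest d T \<and> fleaves T = q}"
proof -
  have sub: "{T. forest d T \<and> fleaves T = q} \<subseteq> {ts. set ts \<subseteq> {t. full d t \<and> hgt t \<le> q} \<and> length ts \<le> q}"
  proof
    fix T assume T: "T \<in> {T. forest d T \<and> fleaves T = q}"
    have ft: "\<forall>t\<in>set T. full d t" using T by (simp add: forest_def)
    have 1: "\<And>t. t \<in> set T \<Longrightarrow> nleaves t \<le> fleaves T"
    proof (induction T)
      case Nil then show ?case by simp
    next
      case (Cons a T)
      show ?case
      proof (cases "t = a")
        case True then show ?thesis by simp
      next
        case False
        then have "nleaves t \<le> fleaves T" using Cons by simp
        then show ?thesis by simp
      qed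
    qed
    have 2: "length T \<le> fleaves T" using ft
    proof (induction T)
      case Nil then show ?case by simp
    next
      case (Cons t T) then show ?case using nleaves_pos[OF _ assms, of t] by simp
    qed
    have "\<And>t. t \<in> set T \<Longrightarrow> hgt t \<le> q" using 1 nleaves_hgt(1)[OF _ assms] ft T by fastforce
    then show "T \<in> {ts. set ts \<subseteq> {t. full d t \<and> hgt t \<le> q} \<and> length ts \<le> q}" using ft 2 T by auto
  qed
  show ?thesis by (rule finite_subset[OF sub finite_lists_length_le[OF finite_trees]])
qed

lemma finite_wr: "finite S \<Longrightarrow> finite (wr q S)"
proof -
  assume f: "finite S"
  have "wr q S \<subseteq> {\<sigma>. \<sigma> permutes {0..<q}} \<times> {fs. set fs \<subseteq> S \<and> length fs = q}"
    by (auto simp: wr_def)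
  moreover have "finite ({\<sigma>. \<sigma> permutes {0..<q}} \<times> {fs. set fs \<subseteq> S \<and> length fs = q})"
    using finite_permutations[of "{0..<q}"] finite_lists_length_eq[OF f] by simp
  ultimately show ?thesis by (rule finite_subset)
qed


lemma aut_comp_ainv: "h \<in> aut d \<Longrightarrow> h \<circ> ainv d h = id"
proof
  fix w assume h: "h \<in> aut d"
  show "(h \<circ> ainv d h) w = id w"
  proof (cases "w \<in> words d")
    case True then show ?thesis using ainv_props(2)[OF h True] by simp
  next
    case False then show ?thesis using aut_off[OF h False] by (simp add: ainv_def)
  qed
qed

locale mloc = hset +
  fixes A :: "(nat list \<Rightarrow> nat list) set" and D :: nat
  assumes d2: "2 \<le> d" and AB: "A \<subseteq> Bset d D" and Aaut: "A \<subseteq> aut d"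
    and css: "coarsely_self_similar d A H"
begin

definition Mset :: "(nat list \<Rightarrow> nat list) set" where
  "Mset = {f \<in> G. \<exists>b \<in> Bset d D. \<exists>h \<in> H. f = b \<circ> h}"

lemma M_G: "Mset \<subseteq> G" by (auto simp: Mset_def)

lemma M_aut: "Mset \<subseteq> aut d" using M_G Gaut by blast

lemma H_M: "H \<subseteq> Mset"
proof
  fix h assume "h \<in> H"
  then have "h \<in> G" "h = id \<circ> h" using HG by auto
  then show "h \<in> Mset" using B_id[of d D] \<open>h \<in> H\<close> unfolding Mset_def by blast
qed

lemma M_H: "\<forall>f\<in>Mset. \<forall>g\<in>H. f \<circ> g \<in> Mset"
proof (intro ballI)
  fix f g assume f: "f \<in> Mset" and g: "g \<in> H"
  obtain b h where bh: "b \<in> Bset d D" "h \<in> H" "f = b \<circ> h" using f by (auto simp: Mset_def)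
  have "f \<circ> g \<in> G" using Gcomp f g HG M_G by blast
  moreover have "h \<circ> g \<in> H" using Hcomp bh g by blast
  moreover have "f \<circ> g = b \<circ> (h \<circ> g)" using bh by (simp add: comp_assoc)
  ultimately show "f \<circ> g \<in> Mset" using bh unfolding Mset_def by blast
qed

lemma M_state: "f \<in> Mset \<Longrightarrow> x < d \<Longrightarrow> state d f x \<in> Mset"
proof -
  assume f: "f \<in> Mset" and x: "x < d"
  obtain b h where bh: "b \<in> Bset d D" "h \<in> H" "f = b \<circ> h" using f by (auto simp: Mset_def)
  have ha: "h \<in> aut d" using bh HG Gaut by blast
  have sG: "state d f x \<in> G" using Gss f M_G x by (auto simp: self_similar_def)
  have sc: "state d f x = state d b (rho d h x) \<circ> state d h x" using state_comp[OF ha x] bh by simp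
  have rx: "rho d h x < d" using rho_cons(2)[OF ha x, of "[]"] by (simp add: words_iff)
  have b': "state d b (rho d h x) \<in> Bset d D" using B_state[OF bh(1) rx] .
  have "state d h x \<in> H \<union> A" using css bh(2) x by (auto simp: coarsely_self_similar_def)
  then show ?thesis
  proof
    assume "state d h x \<in> H"
    then show ?thesis using sG sc b' unfolding Mset_def by blast
  next
    assume a: "state d h x \<in> A"
    have "state d b (rho d h x) \<circ> state d h x \<in> Bset d D" using B_comp[OF b'] a AB by blast
    moreover have "state d f x = (state d b (rho d h x) \<circ> state d h x) \<circ> id" using sc by simp
    ultimately show ?thesis using sG Hid unfolding Mset_def by blast
  qed
qed

lemma M_ss: "self_similar d Mset"
  using M_state by (auto simp: self_similar_def)

lemma valid_trip:
  assumes "forest d T" "fleaves T = m" "e \<in> wr m Mset"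
  shows "valid d G (T, e, triv m)"
proof -
  have "e \<in> wr m G" using wr_mono[OF M_G assms(3)] .
  then show ?thesis using assms by (cases e) (auto simp: valid_def wr_def forest_def triv_def nleaves_rep)
qed

lemma valid_htM: "e \<in> wr n Mset \<Longrightarrow> valid d G (ht n e)"
  using valid_trip[of "triv n" n e] by (simp add: ht_def forest_def triv_def nleaves_rep)

lemma wmult_MH: "e \<in> wr n Mset \<Longrightarrow> w \<in> wr n H \<Longrightarrow> wmult e w \<in> wr n Mset"
  using wmult_wr_gen[OF M_H] by (cases e, cases w) auto

lemma spl_claim:
  assumes "spl d G H n Z"
  shows "\<exists>z. valid d G z \<and> Z = cls d G z \<and> heads z = n \<and> (\<forall>e \<in> wr n Mset. \<exists>T e'. forest d T \<and>
      fleaves T = feet z \<and> e' \<in> wr (feet z) Mset \<and> gmult d G (cls d G (ht n e)) Z = cls d G (T, e', triv (feet z)))"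
  using assms
proof (induction rule: spl.induct)
  case (spl_base w n)
  have vw: "valid d G (ht n w)" using valid_ht[OF spl_base] .
  have all: "\<forall>e \<in> wr n Mset. \<exists>T e'. forest d T \<and> fleaves T = feet (ht n w) \<and> e' \<in> wr (feet (ht n w)) Mset \<and>
        gmult d G (cls d G (ht n e)) (cls d G (triv n, w, triv n)) = cls d G (T, e', triv (feet (ht n w)))"
  proof
    fix e assume e: "e \<in> wr n Mset"
    have "gmult d G (cls d G (ht n e)) (cls d G (triv n, w, triv n)) = cls d G (tprod (ht n e) (ht n w))"
      using gmult_match[of "triv n" e "triv n" w "triv n"] valid_htM[OF e] vw by (simp add: ht_def)
    also have "\<dots> = cls d G (triv n, wmult e w, triv n)" by (simp add: tprod_def ht_def)
    finally have g: "gmult d G (cls d G (ht n e)) (cls d G (triv n, w, triv n)) = cls d G (triv n, wmult e w, triv n)" .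
    have "forest d (triv n)" "fleaves (triv n) = feet (ht n w)" by (simp_all add: forest_def triv_def nleaves_rep)
    then show "\<exists>T e'. forest d T \<and> fleaves T = feet (ht n w) \<and> e' \<in> wr (feet (ht n w)) Mset \<and>
        gmult d G (cls d G (ht n e)) (cls d G (triv n, w, triv n)) = cls d G (T, e', triv (feet (ht n w)))"
      using wmult_MH[OF e spl_base] g by (intro exI[of _ "triv n"] exI[of _ "wmult e w"]) simp
  qed
  have "cls d G (triv n, w, triv n) = cls d G (ht n w)" by (simp add: ht_def)
  then show ?case using vw all ht_heads_feet(1)[of n w] by metis
next
  case (spl_step n X m k w)
  obtain z where z: "valid d G z" "X = cls d G z" "heads z = n"
    "\<forall>e \<in> wr n Mset. \<exists>T e'. forest d T \<and> fleaves T = feet z \<and> e' \<in> wr (feet z) Mset \<and>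
      gmult d G (cls d G (ht n e)) X = cls d G (T, e', triv (feet z))" using spl_step.IH by blast
  have fz: "feet z = m" using has_feet_cls[OF z(1)] spl_step.hyps(2) z(2) by simp
  define c where "c = (caretF d m k, w, triv (m + d - 1))"
  have km: "k < fleaves (triv m)" using spl_step.hyps(3) by (simp add: triv_def nleaves_rep)
  have flc: "fleaves (caretF d m k) = m + d - 1"
    using nleaves_attach(2)[OF d0 km] d0 by (simp add: caretF_def triv_def nleaves_rep)
  have vc: "valid d G c"
    using spl_step.hyps(4) wr_mono[OF HG] flc forest_attachF[of d "triv m" k]
    by (cases w) (auto simp: c_def valid_def wr_def forest_def triv_def nleaves_rep caretF_def)
  have hc: "heads c = m" "feet c = m + d - 1" by (simp_all add: c_def heads_def feet_def caretF_def triv_def)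
  obtain z2 where z2: "valid d G z2" "gmult d G (cls d G z) (cls d G c) = cls d G z2" "heads z2 = heads z"
    "feet z2 = feet c" using gmult_cls[OF z(1) vc] fz hc by metis
  have Zz: "gmult d G X (cls d G (caretF d m k, w, triv (m + d - 1))) = cls d G z2" using z2 z(2) c_def by simp
  have hz: "heads z2 = n" using z2 z by simp
  have all: "\<forall>e \<in> wr n Mset. \<exists>T e'. forest d T \<and> fleaves T = feet z2 \<and> e' \<in> wr (feet z2) Mset \<and>
        gmult d G (cls d G (ht n e)) (gmult d G X (cls d G (caretF d m k, w, triv (m + d - 1)))) = cls d G (T, e', triv (feet z2))"
  proof
    fix e assume e: "e \<in> wr n Mset"
    obtain T e' where Te: "forest d T" "fleaves T = m" "e' \<in> wr m Mset"
      "gmult d G (cls d G (ht n e)) X = cls d G (T, e', triv m)" using z(4) e fz by metis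
    have vT: "valid d G (T, e', triv m)" using valid_trip[OF Te(1,2,3)] .
    obtain \<sigma>' es' where ee: "e' = (\<sigma>', es')" by (cases e')
    have les: "length es' = m" "\<sigma>' permutes {0..<m}" using Te(3) ee by (auto simp: wr_def)
    have sk: "\<sigma>' k < m" using permutes_in_image[OF les(2)] spl_step.hyps(3) by simp
    have kl: "k < length (snd (fst (snd (T, e', triv m))))" using les ee spl_step.hyps(3) by simp
    have ex: "expand d (T, e', triv m) k = (attachF d (\<sigma>' k) T, kappa d e' k, caretF d m k)"
      by (simp add: expand_def ee caretF_def)
    have vx: "valid d G (expand d (T, e', triv m) k)" using valid_expand[OF vT kl d0 Gaut Gss] .
    have ce: "cls d G (T, e', triv m) = cls d G (expand d (T, e', triv m) k)"
      using cls_eq[OF expand_eqrel[OF vT kl]] .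
    have "gmult d G (cls d G (ht n e)) (gmult d G X (cls d G c))
        = gmult d G (gmult d G (cls d G (ht n e)) (cls d G z)) (cls d G c)"
      using gmult_assoc[OF valid_htM[OF e] z(1) vc] z(2,3) fz hc by simp
    also have "\<dots> = gmult d G (cls d G (expand d (T, e', triv m) k)) (cls d G c)" using Te(4) z(2) ce by simp
    also have "\<dots> = cls d G (tprod (expand d (T, e', triv m) k) c)"
      using gmult_match[of "attachF d (\<sigma>' k) T" "kappa d e' k" "caretF d m k" w "triv (m + d - 1)"] vx vc ex
      by (simp add: c_def)
    also have "\<dots> = cls d G (attachF d (\<sigma>' k) T, wmult (kappa d e' k) w, triv (m + d - 1))"
      by (simp add: ex c_def tprod_def)
    finally have eq: "gmult d G (cls d G (ht n e)) (gmult d G X (cls d G c)) = cls d G (attachF d (\<sigma>' k) T, wmult (kappa d e' k) w, triv (m + d - 1))" .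
    have kw: "kappa d e' k \<in> wr (m + d - 1) Mset"
      using kappa_wr[of \<sigma>' es' m Mset k d] Te(3) ee spl_step.hyps(3) d0 M_aut M_ss by simp
    have fT: "forest d (attachF d (\<sigma>' k) T)" using forest_attachF[OF Te(1)] .
    have flT: "fleaves (attachF d (\<sigma>' k) T) = m + d - 1" using nleaves_attach(2)[OF d0, of "\<sigma>' k" T] sk Te(2) d0 by simp
    show "\<exists>T e'. forest d T \<and> fleaves T = feet z2 \<and> e' \<in> wr (feet z2) Mset \<and>
        gmult d G (cls d G (ht n e)) (gmult d G X (cls d G (caretF d m k, w, triv (m + d - 1)))) = cls d G (T, e', triv (feet z2))"
      using eq fT flT wmult_MH[OF kw spl_step.hyps(4)] z2(4) hc c_def by metis
  qed
  show ?case using z2(1) Zz hz all by blast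
qed

end


context mloc
begin

lemma main_loc:
  assumes XP: "X \<in> PH d G H m"
  shows "finite {Y \<in> PH d G H m. pless d G H X Y \<and> has_phi d G H Y q}"
proof -
  obtain a0 where a0: "valid d G a0" "X = coset d G H (cls d G a0)" "heads a0 = m"
    using XP unfolding PH_def grpd_def using has_heads_cls by auto
  define n0 where "n0 = feet a0"
  define Tset where "Tset = {T. forest d T \<and> fleaves T = q}"
  define Wset where "Wset = wr q (Bset d D \<inter> G)"
  define Cset where "Cset = (\<lambda>(T, f). (T, f, triv q)) ` (Tset \<times> Wset)"
  have fC: "finite Cset"
    unfolding Cset_def Tset_def Wset_def
    using finite_forests[OF d2, of q] finite_wr[of "Bset d D \<inter> G" q] B_finite[of d D] by auto
  have sub: "{Y \<in> PH d G H m. pless d G H X Y \<and> has_phi d G H Y q}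
      \<subseteq> (\<lambda>c. coset d G H (gmult d G (cls d G a0) (cls d G c))) ` Cset"
  proof
    fix Y assume Y: "Y \<in> {Y \<in> PH d G H m. pless d G H X Y \<and> has_phi d G H Y q}"
    obtain c3 where c3: "valid d G c3" "Y = coset d G H (cls d G c3)" "heads c3 = m"
      using Y unfolding PH_def grpd_def using has_heads_cls by auto
    obtain a' b' where ab: "valid d G a'" "valid d G b'" "X = coset d G H (cls d G a')"
      "Y = coset d G H (cls d G b')" "splitting d G H (gmult d G (ginv d G (cls d G a')) (cls d G b'))"
      using Y unfolding pless_def ple_def grpd_def by blast
    obtain c4 where c4: "valid d G c4" "Y = coset d G H (cls d G c4)" "feet c4 = q"
      using Y unfolding has_phi_def grpd_def using has_feet_cls by auto
    have "cls d G a' \<in> coset d G H (cls d G a0)" using self_mem[OF ab(1)] ab(3) a0(2) by simp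
    then obtain z w0 where zw: "valid d G z" "cls d G a' = cls d G z" "heads z = heads a0" "feet z = feet a0"
      "w0 \<in> wr (feet a0) H" "ev_eq d (sem z) (ocomp (sem a0) (sem (ht (feet a0) w0)))"
      using coset_mem_rep[OF a0(1)] by blast
    have a'z: "ev_eq d (sem a') (sem z) \<and> heads a' = heads z \<and> feet a' = feet z"
      using cls_sem_eq[OF ab(1) zw(1,2)] .
    have ha': "heads a' = m" "feet a' = n0" using a'z zw a0 n0_def by auto
    have a'ev: "ev_eq d (sem a') (ocomp (sem a0) (sem (ht n0 w0)))" using a'z zw(6) ev_eq_trans n0_def by metis
    have w0: "w0 \<in> wr n0 H" using zw(5) n0_def by simp
    have "cls d G b' \<in> coset d G H (cls d G c3)" using self_mem[OF ab(2)] ab(4) c3(2) by simp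
    then obtain zb where zb: "valid d G zb" "cls d G b' = cls d G zb" "heads zb = heads c3"
      using coset_mem_rep[OF c3(1)] by blast
    have hb': "heads b' = m" using cls_sem_eq[OF ab(2) zb(1,2)] zb(3) c3(3) by simp
    have "cls d G c4 \<in> coset d G H (cls d G b')" using self_mem[OF c4(1)] ab(4) c4(2) by simp
    then obtain zc where zc: "valid d G zc" "cls d G c4 = cls d G zc" "feet zc = feet b'"
      using coset_mem_rep[OF ab(2)] by blast
    have fb': "feet b' = q" using cls_sem_eq[OF c4(1) zc(1,2)] zc(3) c4(3) by simp
    have vi: "valid d G (tinv d a')" using valid_tinv[OF ab(1)] .
    obtain z0 where z0: "valid d G z0" "gmult d G (cls d G (tinv d a')) (cls d G b') = cls d G z0"
      "heads z0 = heads (tinv d a')" "feet z0 = feet b'" "ev_eq d (sem z0) (ocomp (sem (tinv d a')) (sem b'))"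
      using gmult_cls[OF vi ab(2)] heads_tinv ha' hb' by metis
    have Zeq: "gmult d G (ginv d G (cls d G a')) (cls d G b') = cls d G z0" using ginv_cls[OF ab(1)] z0(2) by simp
    have hz0: "heads z0 = n0" "feet z0 = q" using z0(3,4) heads_tinv ha' fb' by auto
    obtain n where spn: "spl d G H n (cls d G z0)" using ab(5) Zeq unfolding splitting_def by auto
    obtain zz where zz: "valid d G zz" "cls d G z0 = cls d G zz" "heads zz = n"
      "\<forall>e \<in> wr n Mset. \<exists>T e'. forest d T \<and> fleaves T = feet zz \<and> e' \<in> wr (feet zz) Mset \<and>
        gmult d G (cls d G (ht n e)) (cls d G z0) = cls d G (T, e', triv (feet zz))"
      using spl_claim[OF spn] by blast
    have zzf: "heads zz = n0" "feet zz = q" using cls_sem_eq[OF z0(1) zz(1,2)] hz0 by auto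
    have nn: "n = n0" using zz(3) zzf by simp
    have w0M: "w0 \<in> wr n Mset" using wr_mono[OF H_M w0] nn by simp
    obtain T e' where Te: "forest d T" "fleaves T = q" "e' \<in> wr q Mset"
      "gmult d G (cls d G (ht n0 w0)) (cls d G z0) = cls d G (T, e', triv q)"
      using zz(4) w0M zzf nn by metis
    have vTe: "valid d G (T, e', triv q)" using valid_trip[OF Te(1,2,3)] .
    have vh0: "valid d G (ht n0 w0)" using valid_ht[OF w0] .
    have Tev: "ev_eq d (sem (T, e', triv q)) (ocomp (sem (ht n0 w0)) (sem z0)) \<and> heads (T, e', triv q) = heads (ht n0 w0)"
      using gmult_cls'[OF vh0 z0(1) _ Te(4) vTe] hz0 by simp
    have "heads (T, e', triv q) = n0" using Tev by simp
    then have lT: "length T = n0" by (simp add: heads_def)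
    obtain \<pi> es where pe: "e' = (\<pi>, es)" by (cases e')
    have pes: "\<pi> permutes {0..<q}" "length es = q" "set es \<subseteq> Mset" using Te(3) pe by (auto simp: wr_def)
    have "\<forall>i. \<exists>bh. i < q \<longrightarrow> fst bh \<in> Bset d D \<and> snd bh \<in> H \<and> es ! i = fst bh \<circ> snd bh"
    proof
      fix i
      show "\<exists>bh. i < q \<longrightarrow> fst bh \<in> Bset d D \<and> snd bh \<in> H \<and> es ! i = fst bh \<circ> snd bh"
      proof (cases "i < q")
        case True
        then have "es ! i \<in> Mset" using nth_sub[OF pes(3)] pes(2) by simp
        then obtain b h where "b \<in> Bset d D" "h \<in> H" "es ! i = b \<circ> h" by (auto simp: Mset_def)
        then show ?thesis by (intro exI[of _ "(b, h)"]) simp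
      qed simp
    qed
    then obtain bhf where bhf: "\<forall>i. i < q \<longrightarrow> fst (bhf i) \<in> Bset d D \<and> snd (bhf i) \<in> H \<and> es ! i = fst (bhf i) \<circ> snd (bhf i)"
      by (rule choice[THEN exE]) blast
    define bs where "bs = map (\<lambda>i. fst (bhf i)) [0..<q]"
    define hs where "hs = map (\<lambda>i. snd (bhf i)) [0..<q]"
    have bsG: "\<And>i. i < q \<Longrightarrow> bs ! i \<in> G"
    proof -
      fix i assume i: "i < q"
      have hi: "snd (bhf i) \<in> H" "es ! i \<in> G" using bhf i nth_sub[OF pes(3)] pes(2) M_G by auto
      have ha: "snd (bhf i) \<in> aut d" using hi HG Gaut by blast
      have "es ! i \<circ> ainv d (snd (bhf i)) = fst (bhf i) \<circ> (snd (bhf i) \<circ> ainv d (snd (bhf i)))"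
        using bhf i by (simp add: comp_assoc)
      also have "\<dots> = fst (bhf i)" using aut_comp_ainv[OF ha] by simp
      finally have "fst (bhf i) = es ! i \<circ> ainv d (snd (bhf i))" by simp
      moreover have "ainv d (snd (bhf i)) \<in> G" using Ginv hi HG by blast
      ultimately show "bs ! i \<in> G" using Gcomp hi i by (simp add: bs_def)
    qed
    have pbW: "(\<pi>, bs) \<in> Wset"
    proof -
      have "set bs \<subseteq> Bset d D \<inter> G"
      proof
        fix x assume "x \<in> set bs"
        then obtain i where i: "i < q" "x = bs ! i" by (auto simp: in_set_conv_nth bs_def)
        then show "x \<in> Bset d D \<inter> G" using bsG bhf by (simp add: bs_def)
      qed
      then show ?thesis using pes by (simp add: Wset_def wr_def bs_def)
    qed
    have hsH: "(id, hs) \<in> wr q H"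
    proof -
      have "set hs \<subseteq> H" using bhf by (auto simp: hs_def)
      then show ?thesis by (simp add: wr_def hs_def permutes_id)
    qed
    have wm: "wmult (\<pi>, bs) (id, hs) = (\<pi>, es)"
    proof -
      have "map (\<lambda>i. bs ! i \<circ> hs ! i) [0..<q] = es"
        using bhf pes(2) by (intro nth_equalityI) (auto simp: bs_def hs_def)
      then show ?thesis by (simp add: wmult_def hs_def)
    qed
    define c where "c = (T, (\<pi>, bs), triv q)"
    define hh where "hh = ht q (id, hs)"
    have vc: "valid d G c"
      using pbW Te(1,2) by (auto simp: c_def valid_def Wset_def wr_def forest_def triv_def nleaves_rep)
    have vhh: "valid d G hh" using valid_ht[OF hsH] hh_def by simp
    have tp: "tprod c hh = (T, e', triv q)" by (simp add: tprod_def c_def hh_def ht_def wm pe)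
    have cev: "ev_eq d (sem (T, e', triv q)) (ocomp (sem c) (sem hh))"
    proof -
      have "\<forall>r w. w \<in> words d \<longrightarrow> sem (T, e', triv q) r w = ocomp (sem c) (sem hh) r w"
        using sem_tprod[of T "(\<pi>, bs)" "triv q" "(id, hs)" "triv q"] vc vhh tp
        by (simp add: c_def hh_def ht_def comp_sem_ocomp)
      then show ?thesis unfolding ev_eq_def by blast
    qed
    have hc: "heads c = feet a0" "feet c = q" using lT n0_def by (simp_all add: c_def heads_def feet_def triv_def)
    obtain p where p: "valid d G p" "gmult d G (cls d G a0) (cls d G c) = cls d G p" "heads p = heads a0"
      "feet p = feet c" "ev_eq d (sem p) (ocomp (sem a0) (sem c))"
      using gmult_cls[OF a0(1) vc] hc by metis
    have e1: "ev_eq d (sem b') (ocomp (sem a') (ocomp (sem (tinv d a')) (sem b')))"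
      using ev_eq_sym[OF inv_cancel[OF ab(1,2)]] ha' hb' by simp
    have e2: "ev_eq d (ocomp (sem a') (ocomp (sem (tinv d a')) (sem b'))) (ocomp (sem a') (sem z0))"
      using ev_eq_right[OF ev_eq_sym[OF z0(5)] good_sem[OF z0(1)]] .
    have e3: "ev_eq d (ocomp (sem a') (sem z0)) (ocomp (ocomp (sem a0) (sem (ht n0 w0))) (sem z0))"
      using ev_eq_left[OF a'ev good_sem[OF z0(1)]] .
    have e5: "ev_eq d (ocomp (sem a0) (ocomp (sem (ht n0 w0)) (sem z0))) (ocomp (sem a0) (sem (T, e', triv q)))"
      using ev_eq_right[OF ev_eq_sym[OF conjunct1[OF Tev]] good_sem[OF vTe]] .
    have e6: "ev_eq d (ocomp (sem a0) (sem (T, e', triv q))) (ocomp (sem a0) (ocomp (sem c) (sem hh)))"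
      using ev_eq_right[OF cev good_ocomp[OF good_sem[OF vc] good_sem[OF vhh]]] .
    have e8: "ev_eq d (ocomp (ocomp (sem a0) (sem c)) (sem hh)) (ocomp (sem p) (sem hh))"
      using ev_eq_left[OF ev_eq_sym[OF p(5)] good_sem[OF vhh]] .
    have fin: "ev_eq d (sem b') (ocomp (sem p) (sem hh))"
      using e1 e2 e3 e5 e6 e8 ocomp_assoc ev_eq_trans by metis
    have "coset d G H (cls d G p) = coset d G H (cls d G b')"
      using coset_eq[OF p(1) ab(2) _ _ _ hsH] fin p(3,4) a0(3) hb' fb' hc hh_def by simp
    then have "Y = coset d G H (gmult d G (cls d G a0) (cls d G c))" using ab(4) p(2) by simp
    moreover have "c \<in> Cset" using pbW Te(1,2) by (auto simp: Cset_def Tset_def c_def)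
    ultimately show "Y \<in> (\<lambda>c. coset d G H (gmult d G (cls d G a0) (cls d G c))) ` Cset" by blast
  qed
  show ?thesis using finite_subset[OF sub finite_imageI[OF fC]] .
qed

end


lemma A_in_B:
  assumes d2: "2 \<le> d" and fA: "finite A" and Aa: "A \<subseteq> aut d" and vA: "\<forall>a\<in>A. in_Vd d a"
  shows "\<exists>D. A \<subseteq> Bset d D"
proof -
  have "\<forall>a\<in>A. \<exists>Da. \<forall>u\<in>words d. \<forall>v\<in>words d. length u = Da \<longrightarrow> a (u @ v) = a u @ v"
    using vd_depth[OF d2] Aa vA by blast
  then obtain Df where Df: "\<forall>a\<in>A. \<forall>u\<in>words d. \<forall>v\<in>words d. length u = Df a \<longrightarrow> a (u @ v) = a u @ v"
    by (rule bchoice[THEN exE]) blast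
  define D where "D = Max (insert 0 (Df ` A))"
  have le: "\<And>a. a \<in> A \<Longrightarrow> Df a \<le> D" unfolding D_def using fA by simp
  have "A \<subseteq> Bset d D"
  proof
    fix a assume a: "a \<in> A"
    have aa: "a \<in> aut d" using a Aa by blast
    have "\<forall>u\<in>words d. \<forall>v\<in>words d. length u = D \<longrightarrow> a (u @ v) = a u @ v"
    proof (intro ballI impI)
      fix u v assume u: "u \<in> words d" and v: "v \<in> words d" and l: "length u = D"
      have "\<forall>u\<in>words d. \<forall>v\<in>words d. length u = Df a \<longrightarrow> a (u @ v) = a u @ v" using Df a by blast
      moreover have "\<forall>w\<in>words d. length (a w) = length w" using aut_len[OF aa] by blast
      moreover have "Df a \<le> length u" using l le[OF a] by simp
      ultimately show "a (u @ v) = a u @ v" using depth_ge[of d "Df a" a u v] u v by blast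
    qed
    then show "a \<in> Bset d D" using aut_off[OF aa] aut_words[OF aa] aut_len[OF aa] by (simp add: Bset_def)
  qed
  then show ?thesis by blast
qed

theorem mainTheorem12:
  fixes d :: nat and G H A :: "(nat list \<Rightarrow> nat list) set" and m q :: nat
    and X :: "triple set set"
  assumes "d \<ge> 2"
    and "subgrp d G" and "self_similar d G"
    and "subgrp d H" and "H \<subseteq> G"
    and "finite A" and "A \<subseteq> aut d" and "\<forall>a\<in>A. in_Vd d a"
    and "coarsely_self_similar d A H"
    and "X \<in> PH d G H m"
  shows "finite {Y \<in> PH d G H m. pless d G H X Y \<and> has_phi d G H Y q}"
proof -
  obtain D where D: "A \<subseteq> Bset d D" using A_in_B[OF assms(1,6,7,8)] by (elim exE)
  have l: "mloc d G H A D"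
  proof (intro mloc.intro hset.intro gset.intro setting.intro mloc_axioms.intro hset_axioms.intro gset_axioms.intro)
    show "0 < d" using assms(1) by simp
    show "G \<subseteq> aut d" using assms(2) by (simp add: subgrp_def)
    show "self_similar d G" by (rule assms(3))
    show "subgrp d G" by (rule assms(2))
    show "subgrp d H" by (rule assms(4))
    show "H \<subseteq> G" by (rule assms(5))
    show "2 \<le> d" by (rule assms(1))
    show "A \<subseteq> Bset d D" by (rule D)
    show "A \<subseteq> aut d" by (rule assms(7))
    show "coarsely_self_similar d A H" by (rule assms(9))
  qed
  interpret mloc d G H A D by (rule l)
  show ?thesis using main_loc[OF assms(10)] .
qed


end
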